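(* Let $f:\mathbb{R}^2\to[0,\infty)$ be a specified bivariate Lebesgue probability density function satisfying $f(z_1,z_2)=f(z_2,z_1)=f(-z_1,-z_2)$ for all $(z_1,z_2)\in\mathbb{R}^2$. Let $\mathbf{X}=(X_1,X_2)$ have density $f(x_1-\theta_1,x_2-\theta_2)$, where the unknown $\boldsymbol\theta=(\theta_1,\theta_2)$ lies in $\Theta_0=\{(\theta_1,\theta_2):-\infty<\theta_1\le\theta_2<\infty\}$. Let $W:\mathbb{R}\to[0,\infty)$ be absolutely continuous with $W(0)=0$, $W(t)=W(-t)$ for all $t$, $W$ strictly decreasing on $(-\infty,0)$ and strictly increasing on $(0,\infty)$, and $W'$ increasing almost everywhere. Consider the loss $L(\boldsymbol\theta,\mathbf a)=W(a_1-\theta_1)+W(a_2-\theta_2)$, $\mathbf a\in\mathbb{R}^2$, with risk $R(\boldsymbol\theta,\boldsymbol\delta)=E_{\boldsymbol\theta}[L(\boldsymbol\theta,\boldsymbol\delta(\mathbf X))]$. Let $D=X_2-X_1$, $\boldsymbol\delta_0(\mathbf X)=(X_1,X_2)$, and for $\psi:\mathbb{R}\to\mathbb{R}$ let $\boldsymbol\delta_\psi(\mathbf X)=(X_1-\psi(D),X_2+\psi(D))$. Suppose $\lim_{t\to\infty}\psi(t)=0$ and that one of the following holds: (a) $\psi$ is decreasing and $\displaystyle\int_{-\infty}^{\infty}\int_{-\infty}^{t}W'(s-\psi(t))\,f(s,s+y)\,dy\,ds\ge 0$ for all $t\in\mathbb{R}$; or (b) $\psi$ is increasing and $\displaystyle\int_{-\infty}^{\infty}\int_{-\infty}^{t}W'(s-\psi(t))\,f(s,s+y)\,dy\,ds\le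 0$ for all $t\in\mathbb{R}$. Then $R(\boldsymbol\theta,\boldsymbol\delta_\psi)\le R(\boldsymbol\theta,\boldsymbol\delta_0)$ for all $\boldsymbol\theta\in\Theta_0$. *)

theory Defs
  imports "HOL-Analysis.Analysis"
begin

definition abs_cont_on_interval :: "(real \<Rightarrow> real) \<Rightarrow> real \<Rightarrow> real \<Rightarrow> bool" where
  "abs_cont_on_interval W a b \<longleftrightarrow>
     (\<forall>\<epsilon>>0. \<exists>\<delta>>0. \<forall>(n::nat) (l::nat \<Rightarrow> real) (r::nat \<Rightarrow> real).
        (\<forall>i<n. a \<le> l i \<and> l i \<le> r i \<and> r i \<le> b) \<and>
        (\<forall>i<n. \<forall>j<n. i \<noteq> j \<longrightarrow> r i \<le> l j \<or> r j \<le> l i) \<and>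
        (\<Sum>i<n. r i - l i) < \<delta>
        \<longrightarrow> (\<Sum>i<n. \<bar>W (r i) - W (l i)\<bar>) < \<epsilon>)"

definition abs_cont :: "(real \<Rightarrow> real) \<Rightarrow> bool" where
  "abs_cont W \<longleftrightarrow> (\<forall>a b. a \<le> b \<longrightarrow> abs_cont_on_interval W a b)"

definition loss :: "(real \<Rightarrow> real) \<Rightarrow> real \<times> real \<Rightarrow> real \<times> real \<Rightarrow> real" where
  "loss W \<theta> a = W (fst a - fst \<theta>) + W (snd a - snd \<theta>)"

text \<open>Risk R(theta, delta) = E_theta[L(theta, delta(X))], X with density f(x1-theta1, x2-theta2).
  The loss is nonnegative, so the expectation is a nonnegative (possibly infinite) integral.\<close>
definition risk :: "(real \<times> real \<Rightarrow> real) \<Rightarrow> (real \<Rightarrow> real) \<Rightarrow> real \<times> real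
                     \<Rightarrow> (real \<times> real \<Rightarrow> real \<times> real) \<Rightarrow> ennreal" where
  "risk f W \<theta> \<delta> = (\<integral>\<^sup>+ x. ennreal (loss W \<theta> (\<delta> x)) * ennreal (f (fst x - fst \<theta>, snd x - snd \<theta>)) \<partial>lborel)"

definition delta0 :: "real \<times> real \<Rightarrow> real \<times> real" where
  "delta0 x = (fst x, snd x)"

definition delta_psi :: "(real \<Rightarrow> real) \<Rightarrow> real \<times> real \<Rightarrow> real \<times> real" where
  "delta_psi \<psi> x = (let D = snd x - fst x in (fst x - \<psi> D, snd x + \<psi> D))"

definition inner_int :: "(real \<times> real \<Rightarrow> real) \<Rightarrow> real \<Rightarrow> real \<Rightarrow> ennreal" where
  "inner_int f t s = (\<integral>\<^sup>+ y \<in> {..t}. ennreal (f (s, s + y)) \<partial>lborel)"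

text \<open>Positive and negative parts of the double integral
  int_{-inf}^{inf} int_{-inf}^t W'(s - psi t) f(s, s+y) dy ds.\<close>
definition dint_pos :: "(real \<times> real \<Rightarrow> real) \<Rightarrow> (real \<Rightarrow> real) \<Rightarrow> (real \<Rightarrow> real) \<Rightarrow> real \<Rightarrow> ennreal" where
  "dint_pos f W' \<psi> t = (\<integral>\<^sup>+ s. ennreal (max 0 (W' (s - \<psi> t))) * inner_int f t s \<partial>lborel)"

definition dint_neg :: "(real \<times> real \<Rightarrow> real) \<Rightarrow> (real \<Rightarrow> real) \<Rightarrow> (real \<Rightarrow> real) \<Rightarrow> real \<Rightarrow> ennreal" where
  "dint_neg f W' \<psi> t = (\<integral>\<^sup>+ s. ennreal (max 0 (- W' (s - \<psi> t))) * inner_int f t s \<partial>lborel)"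

text \<open>The double integral (as an extended real, existing) is >= 0, resp. <= 0.\<close>
definition dint_nonneg :: "(real \<times> real \<Rightarrow> real) \<Rightarrow> (real \<Rightarrow> real) \<Rightarrow> (real \<Rightarrow> real) \<Rightarrow> real \<Rightarrow> bool" where
  "dint_nonneg f W' \<psi> t \<longleftrightarrow> dint_neg f W' \<psi> t < \<infinity> \<and> dint_neg f W' \<psi> t \<le> dint_pos f W' \<psi> t"

definition dint_nonpos :: "(real \<times> real \<Rightarrow> real) \<Rightarrow> (real \<Rightarrow> real) \<Rightarrow> (real \<Rightarrow> real) \<Rightarrow> real \<Rightarrow> bool" where
  "dint_nonpos f W' \<psi> t \<longleftrightarrow> dint_pos f W' \<psi> t < \<infinity> \<and> dint_pos f W' \<psi> t \<le> dint_neg f W' \<psi> t"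

end

theory Submission
  imports Defs
begin

lemma disjoint_intervals_order:
  fixes C D :: "real set"
  assumes "is_interval C" "is_interval D" "C \<inter> D = {}" "C \<noteq> {}" "D \<noteq> {}"
    and "bounded C" "bounded D"
  shows "Sup C \<le> Inf D \<or> Sup D \<le> Inf C"
proof -
  have key: "Sup C \<le> Inf D" if IC: "is_interval C" and ID: "is_interval D" and dj: "C \<inter> D = {}"
    and x: "x \<in> C" and y: "y \<in> D" and xy: "x < y" and bC: "bounded C" and bD: "bounded D"
    for C D :: "real set" and x y
  proof (rule ccontr)
    assume "\<not> Sup C \<le> Inf D"
    hence "Inf D < Sup C" by simp
    moreover have "bdd_below D" using bD by (rule bounded_imp_bdd_below)
    ultimately obtain q where q: "q \<in> D" "q < Sup C" using y cInf_less_iff[of D "Sup C"]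
      by blast
    have "bdd_above C" using bC by (rule bounded_imp_bdd_above)
    then obtain p where p: "p \<in> C" "q < p" using q x less_cSup_iff[of C q]
      by blast
    show False
    proof (cases "p \<le> y")
      case True
      hence "p \<in> D" using ID q(1) y p(2) mem_is_interval_1_I[where S=D and a=q and b=p and c=y] by linarith
      thus False using p dj by blast
    next
      case False
      hence "y \<in> C" using IC x p(1) xy mem_is_interval_1_I[where S=C and a=x and b=y and c=p] by linarith
      thus False using y dj by blast
    qed
  qed
  obtain x y where x: "x \<in> C" and y: "y \<in> D" using assms by blast
  have "x \<noteq> y" using x y assms(3) by blast
  show ?thesis
  proof (cases "x < y")
    case True thus ?thesis using key[OF assms(1,2,3) x y True assms(6,7)] by simp
  next
    case False
    hence "y < x" using \<open>x \<noteq> y\<close> by simp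
    thus ?thesis using key[OF assms(2,1) _ y x _ assms(7,6)] assms(3) by (simp add: Int_commute)
  qed
qed

lemma ac_single:
  assumes "abs_cont_on_interval W a b" "e > 0"
  obtains d where "d > 0" "\<And>l r. a \<le> l \<Longrightarrow> l \<le> r \<Longrightarrow> r \<le> b \<Longrightarrow> r - l < d \<Longrightarrow> \<bar>W r - W l\<bar> < e"
proof -
  let ?AC = "\<lambda>d::real. d > 0 \<and> (\<forall>(n::nat) l r. (\<forall>i<n. a \<le> l i \<and> l i \<le> r i \<and> r i \<le> b) \<and>
        (\<forall>i<n. \<forall>j<n. i \<noteq> j \<longrightarrow> r i \<le> l j \<or> r j \<le> l i) \<and> (\<Sum>i<n. r i - l i) < d
        \<longrightarrow> (\<Sum>i<n. \<bar>W (r i) - W (l i)\<bar>) < e)"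
  have "?AC (SOME d. ?AC d)"
    by (rule someI_ex) (rule assms(1)[unfolded abs_cont_on_interval_def, rule_format, OF assms(2)])
  then obtain d where d: "d > 0" and H0: "\<forall>(n::nat) l r. (\<forall>i<n. a \<le> l i \<and> l i \<le> r i \<and> r i \<le> b) \<and>
        (\<forall>i<n. \<forall>j<n. i \<noteq> j \<longrightarrow> r i \<le> l j \<or> r j \<le> l i) \<and> (\<Sum>i<n. r i - l i) < d
        \<longrightarrow> (\<Sum>i<n. \<bar>W (r i) - W (l i)\<bar>) < e" by (rule conjE)
  show thesis
  proof (rule that[OF d])
    fix l r assume lr: "a \<le> l" "l \<le> r" "r \<le> b" "r - l < d"
    have "(\<Sum>i<Suc 0. \<bar>W ((\<lambda>_. r) i) - W ((\<lambda>_. l) i)\<bar>) < e"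
      using H0[rule_format, of "Suc 0" "\<lambda>_. l" "\<lambda>_. r"] lr by simp
    thus "\<bar>W r - W l\<bar> < e" by simp
  qed
qed

lemma abs_cont_imp_cont:
  assumes "abs_cont W" shows "isCont W x"
  unfolding continuous_at_eps_delta
proof (intro allI impI)
  fix e :: real assume e: "e > 0"
  have "abs_cont_on_interval W (x-1) (x+1)" using assms unfolding abs_cont_def by simp
  then obtain d where d: "d > 0" and H: "\<And>l r. x-1 \<le> l \<Longrightarrow> l \<le> r \<Longrightarrow> r \<le> x+1 \<Longrightarrow> r - l < d \<Longrightarrow> \<bar>W r - W l\<bar> < e"
    using ac_single[OF _ e] by blast
  show "\<exists>d>0. \<forall>x'. dist x' x < d \<longrightarrow> dist (W x') (W x) < e"
  proof (intro exI[of _ "min d 1"] conjI allI impI)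
    show "0 < min d 1" using d by simp
  next
    fix x' assume "dist x' x < min d 1"
    hence h: "\<bar>x' - x\<bar> < d" "\<bar>x' - x\<bar> < 1" by (auto simp: dist_real_def)
    show "dist (W x') (W x) < e"
    proof (cases "x \<le> x'")
      case True thus ?thesis using H[of x x'] h by (simp add: dist_real_def)
    next
      case False thus ?thesis using H[of x' x] h by (simp add: dist_real_def abs_minus_commute)
    qed
  qed
qed

lemma ac_family:
  assumes "abs_cont_on_interval W a b" "e > 0"
  obtains d where "d > 0" "\<And>F (lo::'x \<Rightarrow> real) hi. finite F \<Longrightarrow> (\<forall>C\<in>F. a \<le> lo C \<and> lo C \<le> hi C \<and> hi C \<le> b) \<Longrightarrow>
      (\<forall>C\<in>F. \<forall>D\<in>F. C \<noteq> D \<longrightarrow> hi C \<le> lo D \<or> hi D \<le> lo C) \<Longrightarrow> (\<Sum>C\<in>F. hi C - lo C) < d \<Longrightarrow>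
      (\<Sum>C\<in>F. \<bar>W (hi C) - W (lo C)\<bar>) < e"
proof -
  let ?AC = "\<lambda>d::real. d > 0 \<and> (\<forall>(n::nat) l r. (\<forall>i<n. a \<le> l i \<and> l i \<le> r i \<and> r i \<le> b) \<and>
        (\<forall>i<n. \<forall>j<n. i \<noteq> j \<longrightarrow> r i \<le> l j \<or> r j \<le> l i) \<and> (\<Sum>i<n. r i - l i) < d
        \<longrightarrow> (\<Sum>i<n. \<bar>W (r i) - W (l i)\<bar>) < e)"
  have "?AC (SOME d. ?AC d)"
    by (rule someI_ex) (rule assms(1)[unfolded abs_cont_on_interval_def, rule_format, OF assms(2)])
  then obtain d where d: "d > 0" and H0: "\<forall>(n::nat) l r. (\<forall>i<n. a \<le> l i \<and> l i \<le> r i \<and> r i \<le> b) \<and>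
        (\<forall>i<n. \<forall>j<n. i \<noteq> j \<longrightarrow> r i \<le> l j \<or> r j \<le> l i) \<and> (\<Sum>i<n. r i - l i) < d
        \<longrightarrow> (\<Sum>i<n. \<bar>W (r i) - W (l i)\<bar>) < e" by (rule conjE)
  show thesis
  proof (rule that[OF d])
    fix F :: "'x set" and lo hi
    assume F: "finite F" and b1: "\<forall>C\<in>F. a \<le> lo C \<and> lo C \<le> hi C \<and> hi C \<le> b"
      and b2: "\<forall>C\<in>F. \<forall>D\<in>F. C \<noteq> D \<longrightarrow> hi C \<le> lo D \<or> hi D \<le> lo C"
      and b3: "(\<Sum>C\<in>F. hi C - lo C) < d"
    obtain h where h: "bij_betw h {0..<card F} F" using ex_bij_betw_nat_finite[OF F] by blast
    have hl: "{..<card F} = {0..<card F}" by auto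
    have hin: "\<And>i. i < card F \<Longrightarrow> h i \<in> F" using h by (auto simp: bij_betw_def)
    have hinj: "\<And>i j. i < card F \<Longrightarrow> j < card F \<Longrightarrow> i \<noteq> j \<Longrightarrow> h i \<noteq> h j"
      using h by (auto simp: bij_betw_def inj_on_def)
    have s1: "(\<Sum>i<card F. hi (h i) - lo (h i)) = (\<Sum>C\<in>F. hi C - lo C)"
      unfolding hl using sum.reindex_bij_betw[OF h, of "\<lambda>C. hi C - lo C"] by simp
    have s2: "(\<Sum>i<card F. \<bar>W (hi (h i)) - W (lo (h i))\<bar>) = (\<Sum>C\<in>F. \<bar>W (hi C) - W (lo C)\<bar>)"
      unfolding hl using sum.reindex_bij_betw[OF h, of "\<lambda>C. \<bar>W (hi C) - W (lo C)\<bar>"] by simp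
    have "(\<Sum>i<card F. \<bar>W ((\<lambda>i. hi (h i)) i) - W ((\<lambda>i. lo (h i)) i)\<bar>) < e"
    proof (rule H0[rule_format], intro conjI allI impI)
      show "a \<le> lo (h i)" "lo (h i) \<le> hi (h i)" "hi (h i) \<le> b" if "i < card F" for i
        using b1 hin[OF that] by auto
      show "hi (h i) \<le> lo (h j) \<or> hi (h j) \<le> lo (h i)" if "i < card F" "j < card F" "i \<noteq> j" for i j
        using b2 hin[OF that(1)] hin[OF that(2)] hinj[OF that] by blast
      show "(\<Sum>i<card F. hi (h i) - lo (h i)) < d" using s1 b3 by simp
    qed
    thus "(\<Sum>C\<in>F. \<bar>W (hi C) - W (lo C)\<bar>) < e" using s2 by simp
  qed
qed

lemma luzin_mono:
  fixes W :: "real \<Rightarrow> real"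
  assumes ac: "abs_cont_on_interval W a b" and mono: "mono_on {a..b} W"
    and cont: "continuous_on {a..b} W"
    and Zsub: "Z \<subseteq> {a..b}" and Zneg: "negligible Z"
  shows "negligible (W ` Z)"
proof -
  have "\<forall>e>0. \<exists>T. W ` Z \<subseteq> T \<and> T \<in> lmeasurable \<and> measure lebesgue T \<le> e"
  proof (intro allI impI)
    fix e :: real assume e: "e > 0"
    obtain d where d: "d > 0" and H: "\<And>F (lo::real set \<Rightarrow> real) hi. finite F \<Longrightarrow> (\<forall>C\<in>F. a \<le> lo C \<and> lo C \<le> hi C \<and> hi C \<le> b) \<Longrightarrow>
      (\<forall>C\<in>F. \<forall>D\<in>F. C \<noteq> D \<longrightarrow> hi C \<le> lo D \<or> hi D \<le> lo C) \<Longrightarrow> (\<Sum>C\<in>F. hi C - lo C) < d \<Longrightarrow>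
      (\<Sum>C\<in>F. \<bar>W (hi C) - W (lo C)\<bar>) < e"
      by (rule ac_family[OF ac e]) blast
    define Z' where "Z' = Z \<inter> {a<..<b}"
    have Z'neg: "negligible Z'" unfolding Z'_def using Zneg negligible_subset by blast
    obtain U where U: "open U" "Z' \<subseteq> U" "emeasure lebesgue (U - Z') < ennreal d" "U - Z' \<in> lmeasurable"
      using sets_lebesgue_outer_open[OF negligible_imp_sets[OF Z'neg] d] by blast
    define U' where "U' = U \<inter> {a<..<b}"
    have U'open: "open U'" unfolding U'_def using U(1) by auto
    have Z'U': "Z' \<subseteq> U'" unfolding U'_def Z'_def using U(2) Z'_def by auto
    have U'sub: "U' \<subseteq> {a<..<b}" unfolding U'_def by auto
    have U'meas: "U' \<in> lmeasurable"
      by (rule lmeasurable_open[OF bounded_subset[OF bounded_Ioo U'sub] U'open])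
    have "emeasure lebesgue U' \<le> emeasure lebesgue ((U - Z') \<union> Z')"
    proof (rule emeasure_mono)
      show "U' \<subseteq> U - Z' \<union> Z'" using U'_def by blast
      show "U - Z' \<union> Z' \<in> sets lebesgue"
        by (rule sets.Un[OF fmeasurableD[OF U(4)] negligible_imp_sets[OF Z'neg]])
    qed
    also have "\<dots> = emeasure lebesgue (U - Z')"
      by (rule emeasure_Un_null_set[OF fmeasurableD[OF U(4)]]) (use Z'neg negligible_iff_null_sets in auto)
    finally have "emeasure lebesgue U' < ennreal d" using U(3) by simp
    hence mU': "measure lebesgue U' < d"
      using emeasure_eq_measure2[OF U'meas] d by (simp add: ennreal_less_iff)
    have boxs: "{l<..<r} \<in> sets lebesgue" for l r :: real
      using lmeasurable_box[of l r] fmeasurableD by (metis box_real(1))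
    define lo where "lo C = Inf C" for C :: "real set"
    define hi where "hi C = Sup C" for C :: "real set"
    have comp: "open C \<and> is_interval C \<and> C \<noteq> {} \<and> C \<subseteq> U' \<and> bounded C \<and>
       a \<le> lo C \<and> lo C \<le> hi C \<and> hi C \<le> b \<and> {lo C<..<hi C} \<subseteq> C \<and> C \<subseteq> {lo C..hi C}"
      if C: "C \<in> components U'" for C
    proof -
      have o: "open C" using open_components[OF U'open C] .
      have i: "is_interval C" using in_components_connected[OF C] is_interval_connected_1 by blast
      have ne: "C \<noteq> {}" using in_components_nonempty[OF C] .
      have sub: "C \<subseteq> U'" using in_components_subset[OF C] .
      hence sub2: "C \<subseteq> {a<..<b}" using U'sub by blast
      have bd: "bounded C" using bounded_subset[OF bounded_Ioo sub2] .
      have ba: "bdd_above C" "bdd_below C" using bd bounded_imp_bdd_above bounded_imp_bdd_below by auto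
      obtain x where x: "x \<in> C" using ne by blast
      have "a \<le> lo C" unfolding lo_def using ne sub2 by (intro cInf_greatest) auto
      moreover have "lo C \<le> hi C" unfolding lo_def hi_def using x ba
        by (meson cInf_lower cSup_upper order.trans)
      moreover have "hi C \<le> b" unfolding hi_def using ne sub2 by (intro cSup_least) auto
      moreover have "{lo C<..<hi C} \<subseteq> C"
      proof
        fix y assume y: "y \<in> {lo C<..<hi C}"
        obtain p where p: "p \<in> C" "p < y" using y ne ba cInf_less_iff[of C y] unfolding lo_def by auto
        obtain q where q: "q \<in> C" "y < q" using y ne ba less_cSup_iff[of C y] unfolding hi_def by auto
        show "y \<in> C" using mem_is_interval_1_I[where S=C and a=p and b=y and c=q] i p q by linarith
      qed
      moreover have "C \<subseteq> {lo C..hi C}" unfolding lo_def hi_def using ba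
        by (auto intro: cInf_lower cSup_upper)
      ultimately show ?thesis using o i ne sub bd by blast
    qed
    have fin: "(\<Sum>C\<in>F. \<bar>W (hi C) - W (lo C)\<bar>) < e" if F: "finite F" "F \<subseteq> components U'" for F
    proof (rule H[OF F(1)])
      show "\<forall>C\<in>F. a \<le> lo C \<and> lo C \<le> hi C \<and> hi C \<le> b" using comp F(2) by blast
      show "\<forall>C\<in>F. \<forall>D\<in>F. C \<noteq> D \<longrightarrow> hi C \<le> lo D \<or> hi D \<le> lo C"
      proof (intro ballI impI)
        fix C D assume CD: "C \<in> F" "D \<in> F" "C \<noteq> D"
        have "C \<inter> D = {}" using pairwise_disjoint_components[of U'] CD F(2) unfolding pairwise_def by blast
        thus "hi C \<le> lo D \<or> hi D \<le> lo C" unfolding hi_def lo_def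
          using disjoint_intervals_order[of C D] comp[of C] comp[of D] CD F(2) by blast
      qed
      have "(\<Sum>C\<in>F. hi C - lo C) = (\<Sum>C\<in>F. measure lebesgue {lo C<..<hi C})"
        using comp F(2) by (intro sum.cong) (auto simp: measure_completion measure_lborel_Ioo)
      also have "\<dots> = measure lebesgue (\<Union>C\<in>F. {lo C<..<hi C})"
      proof (rule measure_finite_Union[symmetric, OF F(1)])
        show "(\<lambda>C. {lo C<..<hi C}) ` F \<subseteq> sets lebesgue" by auto
        show "disjoint_family_on (\<lambda>C. {lo C<..<hi C}) F"
          unfolding disjoint_family_on_def
        proof (intro ballI impI)
          fix C D assume CD: "C \<in> F" "D \<in> F" "C \<noteq> D"
          have "C \<inter> D = {}" using pairwise_disjoint_components[of U'] CD F(2) unfolding pairwise_def by blast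
          thus "{lo C<..<hi C} \<inter> {lo D<..<hi D} = {}" using comp[of C] comp[of D] CD F(2) by blast
        qed
        show "emeasure lebesgue {lo C<..<hi C} \<noteq> \<infinity>" for C
          using lmeasurable_box[of "lo C" "hi C"] by (simp add: fmeasurable_def)
      qed
      also have "\<dots> \<le> measure lebesgue U'"
      proof (rule measure_mono_fmeasurable[OF _ _ U'meas])
        show "(\<Union>C\<in>F. {lo C<..<hi C}) \<subseteq> U'" using comp F(2) by blast
        show "(\<Union>C\<in>F. {lo C<..<hi C}) \<in> sets lebesgue"
          using F(1) boxs by (intro sets.finite_UN) auto
      qed
      finally show "(\<Sum>C\<in>F. hi C - lo C) < d" using mU' by linarith
    qed
    have cpt: "W ` K \<in> lmeasurable \<and> measure lebesgue (W ` K) \<le> e" if K: "compact K" "K \<subseteq> U'" for K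
    proof -
      obtain F where F: "F \<subseteq> components U'" "finite F" "K \<subseteq> \<Union>F"
        using compactE[OF K(1), of "components U'"] K(2) open_components[OF U'open] by auto
      have Kab: "K \<subseteq> {a..b}" using K(2) U'sub by auto
      have WK: "W ` K \<in> lmeasurable"
        using compact_continuous_image[OF continuous_on_subset[OF cont Kab] K(1)] lmeasurable_compact by blast
      have sub: "W ` K \<subseteq> (\<Union>C\<in>F. {W (lo C)..W (hi C)})"
      proof
        fix y assume "y \<in> W ` K"
        then obtain x where x: "x \<in> K" "y = W x" by blast
        then obtain C where C: "C \<in> F" "x \<in> C" using F(3) by blast
        have cC: "C \<in> components U'" using C F(1) by blast
        have c: "a \<le> lo C" "lo C \<le> x" "x \<le> hi C" "hi C \<le> b" using comp[OF cC] C(2) by auto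
        have "W (lo C) \<le> W x" "W x \<le> W (hi C)"
          using mono_onD[OF mono, of "lo C" x] mono_onD[OF mono, of x "hi C"] c by auto
        thus "y \<in> (\<Union>C\<in>F. {W (lo C)..W (hi C)})" using C x by auto
      qed
      have "measure lebesgue (W ` K) \<le> measure lebesgue (\<Union>C\<in>F. {W (lo C)..W (hi C)})"
        by (rule measure_mono_fmeasurable[OF sub]) (use WK F(2) in \<open>auto intro!: fmeasurable.finite_UN\<close>)
      also have "\<dots> \<le> (\<Sum>C\<in>F. measure lebesgue {W (lo C)..W (hi C)})"
        by (rule measure_UNION_le[OF F(2)]) auto
      also have "\<dots> \<le> (\<Sum>C\<in>F. \<bar>W (hi C) - W (lo C)\<bar>)"
        by (intro sum_mono) (auto simp: measure_completion)
      also have "\<dots> < e" using fin[OF F(2,1)] .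
      finally show ?thesis using WK by simp
    qed
    obtain Kn where Kn: "\<And>n. compact (Kn n)" "\<And>n. Kn n \<subseteq> U'" "\<And>n. Kn n \<subseteq> interior (Kn (Suc n))"
       "\<Union>(range Kn) = U'"
      using open_Union_compact_subsets[OF U'open] by metis
    define T where "T = (\<Union>n. W ` Kn n) \<union> {W a, W b}"
    have ZT: "W ` Z \<subseteq> T"
    proof
      fix y assume "y \<in> W ` Z"
      then obtain z where z: "z \<in> Z" "y = W z" by blast
      show "y \<in> T"
      proof (cases "z \<in> {a<..<b}")
        case True
        hence "z \<in> U'" using z Z'U' Z'_def by auto
        then obtain n where "z \<in> Kn n" using Kn(4) by blast
        thus ?thesis using z T_def by auto
      next
        case False
        hence "z = a \<or> z = b" using z Zsub by auto
        thus ?thesis using z T_def by auto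
      qed
    qed
    have inc: "incseq (\<lambda>n. W ` Kn n)"
      by (rule incseq_SucI) (use Kn(3) interior_subset in blast)
    have meas: "range (\<lambda>n. W ` Kn n) \<subseteq> sets lebesgue" using cpt Kn by auto
    have "emeasure lebesgue (\<Union>n. W ` Kn n) = (SUP n. emeasure lebesgue (W ` Kn n))"
      using SUP_emeasure_incseq[OF meas inc] by simp
    also have "\<dots> \<le> ennreal e"
    proof (rule SUP_least)
      fix n
      show "emeasure lebesgue (W ` Kn n) \<le> ennreal e"
        using cpt[OF Kn(1,2)] emeasure_eq_measure2 by (metis ennreal_leI)
    qed
    finally have eU: "emeasure lebesgue (\<Union>n. W ` Kn n) \<le> ennreal e" .
    have Usets: "(\<Union>n. W ` Kn n) \<in> sets lebesgue" using meas by auto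
    have eT: "emeasure lebesgue T = emeasure lebesgue (\<Union>n. W ` Kn n)"
      unfolding T_def by (rule emeasure_Un_null_set[OF Usets]) (auto simp: negligible_iff_null_sets[symmetric])
    have Tsets: "T \<in> sets lebesgue" unfolding T_def
      by (rule sets.Un[OF Usets negligible_imp_sets]) simp
    have eTe: "emeasure lebesgue T \<le> ennreal e" using eT eU by (rule ssubst)
    have "emeasure lebesgue T < \<infinity>"
      using order_le_less_trans[OF eTe ennreal_less_top] by simp
    hence Tm: "T \<in> lmeasurable" using Tsets unfolding fmeasurable_def by simp
    have "ennreal (measure lebesgue T) \<le> ennreal e" using eTe emeasure_eq_measure2[OF Tm] by simp
    hence "measure lebesgue T \<le> e" using e by (simp add: ennreal_le_iff)
    thus "\<exists>T. W ` Z \<subseteq> T \<and> T \<in> lmeasurable \<and> measure lebesgue T \<le> e" using ZT Tm by blast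
  qed
  thus ?thesis using negligible_outer_le by blast
qed

lemma ftc_mono_piece:
  fixes G G' :: "real \<Rightarrow> real"
  assumes ac: "abs_cont_on_interval G a b" and cont: "continuous_on {a..b} G"
    and smono: "\<And>s t. a \<le> s \<Longrightarrow> s < t \<Longrightarrow> t \<le> b \<Longrightarrow> G s < G t" and ab: "a \<le> b"
    and Nd: "negligible Nd" and der: "\<And>x. x \<in> {a..b} - Nd \<Longrightarrow> (G has_real_derivative G' x) (at x)"
  shows "((\<lambda>x. \<bar>G' x\<bar>) has_integral (G b - G a)) {a..b}"
proof -
  define S where "S = {a..b} - Nd"
  have Ssets: "S \<in> sets lebesgue" unfolding S_def
    by (intro sets.Diff negligible_imp_sets[OF Nd]) auto
  have derS: "\<And>x. x \<in> S \<Longrightarrow> (G has_field_derivative G' x) (at x within S)"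
    using der unfolding S_def by (blast intro: has_field_derivative_at_within)
  have mono: "mono_on {a..b} G"
    by (rule mono_onI) (metis atLeastAtMost_iff less_eq_real_def smono)
  have smo: "strict_mono_on {a..b} G"
    by (rule strict_mono_onI) (use smono in auto)
  have inj: "inj_on G {a..b}" using strict_mono_on_imp_inj_on[OF smo] .
  have injS: "inj_on G S" using inj_on_subset[OF inj] S_def by blast
  have img: "G ` {a..b} = {G a..G b}"
  proof
    show "G ` {a..b} \<subseteq> {G a..G b}" using mono ab by (auto intro!: mono_onD[OF mono])
    show "{G a..G b} \<subseteq> G ` {a..b}"
    proof
      fix y assume "y \<in> {G a..G b}"
      then obtain x where "a \<le> x" "x \<le> b" "G x = y" using IVT'[of G a y b] cont ab by auto
      thus "y \<in> G ` {a..b}" by auto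
    qed
  qed
  have negl: "negligible (G ` ({a..b} \<inter> Nd))"
    by (rule luzin_mono[OF ac mono cont]) (auto intro: negligible_subset[OF Nd])
  have GS: "G ` S = {G a..G b} - G ` ({a..b} \<inter> Nd)"
    unfolding S_def img[symmetric] using inj by (auto simp: inj_on_def)
  have sd: "negligible (sym_diff {G a..G b} (G ` S))"
    by (rule negligible_subset[OF negl]) (auto simp: GS)
  have GSm: "G ` S \<in> lmeasurable"
    by (rule lmeasurable_negligible_symdiff[OF _ sd]) simp
  have mGS: "measure lebesgue (G ` S) = G b - G a"
  proof -
    have Ilm: "{G a..G b} \<in> lmeasurable" by simp
    have "G a \<le> G b" using ab smono[of a b] by (cases "a = b") auto
    thus ?thesis using measure_negligible_symdiff[OF Ilm sd] by (simp add: measure_completion)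
  qed
  have rhs: "(\<lambda>x. 1::real) absolutely_integrable_on (G ` S) \<and> integral (G ` S) (\<lambda>x. 1) = G b - G a"
  proof
    show "(\<lambda>x. 1::real) absolutely_integrable_on (G ` S)" by (rule absolutely_integrable_on_const[OF GSm])
    show "integral (G ` S) (\<lambda>x. 1) = G b - G a" using lmeasure_integral[OF GSm] mGS by simp
  qed
  have lhs: "(\<lambda>x. \<bar>G' x\<bar> * 1) absolutely_integrable_on S \<and> integral S (\<lambda>x. \<bar>G' x\<bar> * 1) = G b - G a"
    using has_absolute_integral_change_of_variables_1'[OF Ssets derS injS, of "\<lambda>_. 1" "G b - G a"] rhs
    by simp
  hence "((\<lambda>x. \<bar>G' x\<bar>) has_integral (G b - G a)) S"
    using absolutely_integrable_on_def has_integral_integrable_integral by fastforce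
  moreover have "((\<lambda>x. \<bar>G' x\<bar>) has_integral (G b - G a)) S = ((\<lambda>x. \<bar>G' x\<bar>) has_integral (G b - G a)) {a..b}"
  proof (rule has_integral_spike_set_eq)
    show "negligible {x \<in> S - {a..b}. \<bar>G' x\<bar> \<noteq> 0}" by (rule negligible_subset[OF Nd]) (auto simp: S_def)
    show "negligible {x \<in> {a..b} - S. \<bar>G' x\<bar> \<noteq> 0}" by (rule negligible_subset[OF Nd]) (auto simp: S_def)
  qed
  ultimately show ?thesis by simp
qed

lemma null_interval_point:
  fixes N :: "real set"
  assumes "N \<in> null_sets lborel" "a < b"
  obtains x where "a < x" "x < b" "x \<notin> N"
proof -
  have "\<exists>x. a < x \<and> x < b \<and> x \<notin> N"
  proof (rule ccontr)
    assume "\<not> ?thesis"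
    hence sub: "{a<..<b} \<subseteq> N" by auto
    have "emeasure lborel {a<..<b} \<le> emeasure lborel N"
      by (rule emeasure_mono[OF sub]) (use assms(1) in auto)
    moreover have "emeasure lborel N = 0" using assms(1) by auto
    ultimately show False using assms(2) by (simp add: emeasure_lborel_Ioo)
  qed
  thus ?thesis using that by blast
qed

lemma V_construct:
  fixes W' :: "real \<Rightarrow> real"
  assumes N: "N \<in> null_sets lborel" and mo: "mono_on (- N) W'"
  obtains V where "mono V" "\<And>x. x \<notin> N \<Longrightarrow> V x = W' x"
proof -
  define A where "A x = W' ` {y. y \<notin> N \<and> y \<le> x}" for x
  have ne: "A x \<noteq> {}" for x
  proof -
    obtain y where "x - 1 < y" "y < x" "y \<notin> N" using null_interval_point[OF N, of "x - 1" x] by auto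
    thus ?thesis unfolding A_def by auto
  qed
  have bdd: "bdd_above (A x)" for x
  proof -
    obtain z where z: "x < z" "z < x + 1" "z \<notin> N" using null_interval_point[OF N, of x "x + 1"] by auto
    have "\<forall>w\<in>A x. w \<le> W' z" unfolding A_def
      using z mo by (auto intro!: mono_onD[OF mo])
    thus ?thesis unfolding bdd_above_def by blast
  qed
  define V where "V x = Sup (A x)" for x
  show thesis
  proof (rule that)
    show "mono V" unfolding V_def
      by (rule monoI, rule cSup_subset_mono[OF ne bdd]) (auto simp: A_def)
    show "V x = W' x" if "x \<notin> N" for x unfolding V_def
      by (rule cSup_eq_maximum) (use that mo in \<open>auto simp: A_def intro!: mono_onD[OF mo]\<close>)
  qed
qed

locale Wloc =
  fixes W V :: "real \<Rightarrow> real" and Nd :: "real set"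
  assumes W_ac: "abs_cont W" and W_0: "W 0 = 0" and W_nonneg: "\<And>t. W t \<ge> 0"
    and W_dec: "\<And>s t. s < t \<Longrightarrow> t < 0 \<Longrightarrow> W t < W s"
    and W_inc: "\<And>s t. 0 < s \<Longrightarrow> s < t \<Longrightarrow> W s < W t"
    and V_mono: "mono V" and Nd: "Nd \<in> null_sets lborel"
    and der: "\<And>x. x \<notin> Nd \<Longrightarrow> (W has_real_derivative V x) (at x)"
begin

lemma W_cont: "continuous_on A W"
  by (rule continuous_at_imp_continuous_on) (use abs_cont_imp_cont[OF W_ac] in blast)

lemma W_sinc: "0 \<le> s \<Longrightarrow> s < t \<Longrightarrow> W s < W t"
proof (cases "s = 0")
  case True
  assume "s < t"
  hence "W (t/2) < W t" using W_inc[of "t/2" t] True by simp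
  thus ?thesis using True W_0 W_nonneg[of "t/2"] by simp
next
  case False
  assume "0 \<le> s" "s < t" thus ?thesis using W_inc False by simp
qed

lemma W_sdec: "s < t \<Longrightarrow> t \<le> 0 \<Longrightarrow> W t < W s"
proof (cases "t = 0")
  case True
  assume "s < t"
  hence "W (s/2) < W s" using W_dec[of s "s/2"] True by simp
  thus ?thesis using True W_0 W_nonneg[of "s/2"] by simp
next
  case False
  assume "s < t" "t \<le> 0" thus ?thesis using W_dec False by simp
qed

lemma V_pos: "x > 0 \<Longrightarrow> V x \<ge> 0"
proof -
  assume x: "x > 0"
  obtain x' where x': "0 < x'" "x' < x" "x' \<notin> Nd" using null_interval_point[OF Nd x] by blast
  have "mono_on {0..} W" by (rule mono_onI) (metis atLeast_iff less_eq_real_def W_sinc)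
  moreover have "x' \<in> interior {0..}" using x' by simp
  ultimately have "V x' \<ge> 0" using mono_on_imp_deriv_nonneg der[OF x'(3)] by blast
  thus ?thesis using monoD[OF V_mono, of x' x] x' by simp
qed

lemma V_neg: "x < 0 \<Longrightarrow> V x \<le> 0"
proof -
  assume x: "x < 0"
  obtain x' where x': "x < x'" "x' < 0" "x' \<notin> Nd" using null_interval_point[OF Nd x] by blast
  have "mono_on {..0} (\<lambda>x. - W x)" by (rule mono_onI) (metis atMost_iff less_eq_real_def W_sdec neg_le_iff_le)
  moreover have "x' \<in> interior {..0}" using x' by simp
  moreover have "((\<lambda>x. - W x) has_real_derivative (- V x')) (at x')" using der[OF x'(3)] by (rule DERIV_minus)
  ultimately have "- V x' \<ge> 0" using mono_on_imp_deriv_nonneg by blast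
  thus ?thesis using monoD[OF V_mono, of x x'] x' by simp
qed

lemma Nd_negl: "negligible Nd"
  using Nd negligible_iff_null_sets null_sets_completionI by blast

lemma V_borel[measurable]: "V \<in> borel_measurable borel"
  using borel_measurable_mono[OF V_mono] .

lemma int_pos: "0 \<le> a \<Longrightarrow> a \<le> b \<Longrightarrow> ((\<lambda>x. \<bar>V x\<bar>) has_integral (W b - W a)) {a..b}"
  by (rule ftc_mono_piece[OF _ W_cont _ _ Nd_negl der])
     (use W_ac W_sinc in \<open>auto simp: abs_cont_def\<close>)

lemma ac_neg: "a \<le> b \<Longrightarrow> abs_cont_on_interval (\<lambda>x. - W x) a b"
proof -
  assume "a \<le> b"
  hence "abs_cont_on_interval W a b" using W_ac by (simp add: abs_cont_def)
  thus ?thesis unfolding abs_cont_on_interval_def by (simp add: abs_minus_commute)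
qed

lemma int_neg: "a \<le> b \<Longrightarrow> b \<le> 0 \<Longrightarrow> ((\<lambda>x. \<bar>V x\<bar>) has_integral (W a - W b)) {a..b}"
proof -
  assume ab: "a \<le> b" "b \<le> 0"
  have "((\<lambda>x. \<bar>- V x\<bar>) has_integral ((- W b) - (- W a))) {a..b}"
  proof (rule ftc_mono_piece[OF ac_neg[OF ab(1)] _ _ ab(1) Nd_negl])
    show "continuous_on {a..b} (\<lambda>x. - W x)" using W_cont by (intro continuous_intros)
    show "- W s < - W t" if "a \<le> s" "s < t" "t \<le> b" for s t using W_sdec[of s t] that ab by simp
    show "((\<lambda>x. - W x) has_real_derivative - V x) (at x)" if "x \<in> {a..b} - Nd" for x
      using der that by (auto intro: DERIV_minus)
  qed
  thus ?thesis by simp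
qed

lemma nn_abs: "a \<le> b \<Longrightarrow> ((\<lambda>x. \<bar>V x\<bar>) has_integral I) {a..b} \<Longrightarrow>
    (\<integral>\<^sup>+u. ennreal \<bar>V u\<bar> * indicator {a..b} u \<partial>lborel) = ennreal I"
  by (rule nn_integral_has_integral_lebesgue') auto

lemma nn_pos: "0 \<le> a \<Longrightarrow> a \<le> b \<Longrightarrow> (\<integral>\<^sup>+u. ennreal (V u) * indicator {a..b} u \<partial>lborel) = ennreal (W b - W a)"
proof -
  assume ab: "0 \<le> a" "a \<le> b"
  have "(\<integral>\<^sup>+u. ennreal (V u) * indicator {a..b} u \<partial>lborel) = (\<integral>\<^sup>+u. ennreal \<bar>V u\<bar> * indicator {a..b} u \<partial>lborel)"
  proof (rule nn_integral_cong_AE)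
    show "AE u in lborel. ennreal (V u) * indicator {a..b} u = ennreal \<bar>V u\<bar> * indicator {a..b} u"
      using AE_lborel_singleton[of 0]
    proof eventually_elim
      case (elim u) thus ?case using V_pos[of u] ab by (auto split: split_indicator)
    qed
  qed
  also have "\<dots> = ennreal (W b - W a)" by (rule nn_abs[OF ab(2) int_pos[OF ab]])
  finally show ?thesis .
qed

lemma nn_pos0: "0 \<le> a \<Longrightarrow> (\<integral>\<^sup>+u. ennreal (- V u) * indicator {a..b} u \<partial>lborel) = 0"
proof -
  assume ab: "0 \<le> a"
  have "(\<integral>\<^sup>+u. ennreal (- V u) * indicator {a..b} u \<partial>lborel) = 0"
  proof (subst nn_integral_0_iff_AE)
    show "AE u in lborel. ennreal (- V u) * indicator {a..b} u = 0"
      using AE_lborel_singleton[of 0]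
    proof eventually_elim
      case (elim u) thus ?case using V_pos[of u] ab by (auto split: split_indicator simp: ennreal_neg)
    qed
  qed simp
  thus ?thesis by simp
qed

lemma nn_neg: "a \<le> b \<Longrightarrow> b \<le> 0 \<Longrightarrow> (\<integral>\<^sup>+u. ennreal (- V u) * indicator {a..b} u \<partial>lborel) = ennreal (W a - W b)"
proof -
  assume ab: "a \<le> b" "b \<le> 0"
  have "(\<integral>\<^sup>+u. ennreal (- V u) * indicator {a..b} u \<partial>lborel) = (\<integral>\<^sup>+u. ennreal \<bar>V u\<bar> * indicator {a..b} u \<partial>lborel)"
  proof (rule nn_integral_cong_AE)
    show "AE u in lborel. ennreal (- V u) * indicator {a..b} u = ennreal \<bar>V u\<bar> * indicator {a..b} u"
      using AE_lborel_singleton[of 0]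
    proof eventually_elim
      case (elim u) thus ?case using V_neg[of u] ab by (auto split: split_indicator)
    qed
  qed
  also have "\<dots> = ennreal (W a - W b)" by (rule nn_abs[OF ab(1) int_neg[OF ab]])
  finally show ?thesis .
qed

lemma nn_neg0: "b \<le> 0 \<Longrightarrow> (\<integral>\<^sup>+u. ennreal (V u) * indicator {a..b} u \<partial>lborel) = 0"
proof -
  assume ab: "b \<le> 0"
  have "(\<integral>\<^sup>+u. ennreal (V u) * indicator {a..b} u \<partial>lborel) = 0"
  proof (subst nn_integral_0_iff_AE)
    show "AE u in lborel. ennreal (V u) * indicator {a..b} u = 0"
      using AE_lborel_singleton[of 0]
    proof eventually_elim
      case (elim u) thus ?case using V_neg[of u] ab by (auto split: split_indicator simp: ennreal_neg)
    qed
  qed simp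
  thus ?thesis by simp
qed

lemma nn_split:
  fixes f :: "real \<Rightarrow> ennreal"
  assumes [measurable]: "f \<in> borel_measurable borel" and xy: "x \<le> 0" "0 \<le> y"
  shows "(\<integral>\<^sup>+u. f u * indicator {x..y} u \<partial>lborel) =
    (\<integral>\<^sup>+u. f u * indicator {x..0} u \<partial>lborel) + (\<integral>\<^sup>+u. f u * indicator {0..y} u \<partial>lborel)"
proof -
  have "(\<integral>\<^sup>+u. f u * indicator {x..y} u \<partial>lborel) = (\<integral>\<^sup>+u. f u * indicator {x..0} u + f u * indicator {0..y} u \<partial>lborel)"
  proof (rule nn_integral_cong_AE)
    show "AE u in lborel. f u * indicator {x..y} u = f u * indicator {x..0} u + f u * indicator {0..y} u"
      using AE_lborel_singleton[of 0]
    proof eventually_elim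
      case (elim u) thus ?case using xy by (auto split: split_indicator)
    qed
  qed
  also have "\<dots> = (\<integral>\<^sup>+u. f u * indicator {x..0} u \<partial>lborel) + (\<integral>\<^sup>+u. f u * indicator {0..y} u \<partial>lborel)"
    by (rule nn_integral_add) auto
  finally show ?thesis .
qed

lemma FTC: "x \<le> y \<Longrightarrow> ennreal (W x) + (\<integral>\<^sup>+u. ennreal (V u) * indicator {x..y} u \<partial>lborel)
   = ennreal (W y) + (\<integral>\<^sup>+u. ennreal (- V u) * indicator {x..y} u \<partial>lborel)"
proof -
  assume xy: "x \<le> y"
  consider "0 \<le> x" | "y \<le> 0" | "x < 0" "0 < y" by linarith
  thus ?thesis
  proof cases
    case 1
    have "W x \<le> W y" using W_sinc[of x y] 1 xy by (cases "x = y") auto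
    thus ?thesis using nn_pos[OF 1 xy] nn_pos0[OF 1, of y] W_nonneg[of x]
      by (simp add: ennreal_plus[symmetric] del: ennreal_plus)
  next
    case 2
    have "W y \<le> W x" using W_sdec[of x y] 2 xy by (cases "x = y") auto
    thus ?thesis using nn_neg[OF xy 2] nn_neg0[OF 2, of x] W_nonneg[of y]
      by (simp add: ennreal_plus[symmetric] del: ennreal_plus)
  next
    case 3
    have s1: "(\<integral>\<^sup>+u. ennreal (V u) * indicator {x..y} u \<partial>lborel) = ennreal (W y)"
      using nn_split[of "\<lambda>u. ennreal (V u)" x y] 3 nn_neg0[of 0 x] nn_pos[of 0 y] W_0 by simp
    have s2: "(\<integral>\<^sup>+u. ennreal (- V u) * indicator {x..y} u \<partial>lborel) = ennreal (W x)"
      using nn_split[of "\<lambda>u. ennreal (- V u)" x y] 3 nn_neg[of x 0] nn_pos0[of 0 y] W_0 by simp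
    show ?thesis using s1 s2 by (simp add: add.commute)
  qed
qed

lemma bound_p: "x \<le> y \<Longrightarrow> (\<integral>\<^sup>+u. ennreal (V u) * indicator {x..y} u \<partial>lborel) \<le> ennreal (W y)"
proof -
  assume xy: "x \<le> y"
  consider "0 \<le> x" | "y \<le> 0" | "x < 0" "0 < y" by linarith
  thus ?thesis
  proof cases
    case 1 thus ?thesis using nn_pos[OF 1 xy] W_nonneg[of x] by (simp add: ennreal_leI)
  next
    case 2 thus ?thesis using nn_neg0[OF 2, of x] by simp
  next
    case 3
    thus ?thesis using nn_split[of "\<lambda>u. ennreal (V u)" x y] 3 nn_neg0[of 0 x] nn_pos[of 0 y] W_0 by simp
  qed
qed

lemma bound_n: "x \<le> y \<Longrightarrow> (\<integral>\<^sup>+u. ennreal (- V u) * indicator {x..y} u \<partial>lborel) \<le> ennreal (W x)"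
proof -
  assume xy: "x \<le> y"
  consider "0 \<le> x" | "y \<le> 0" | "x < 0" "0 < y" by linarith
  thus ?thesis
  proof cases
    case 1 thus ?thesis using nn_pos0[OF 1, of y] by simp
  next
    case 2 thus ?thesis using nn_neg[OF xy 2] W_nonneg[of y] by (simp add: ennreal_leI)
  next
    case 3
    thus ?thesis using nn_split[of "\<lambda>u. ennreal (- V u)" x y] 3 nn_neg[of x 0] nn_pos0[of 0 y] W_0 by simp
  qed
qed

end

lemma downset_seq:
  fixes S :: "real set"
  assumes down: "\<And>y y'. y \<in> S \<Longrightarrow> y' \<le> y \<Longrightarrow> y' \<in> S" and ne: "S \<noteq> {}"
  obtains t :: "nat \<Rightarrow> real" where "\<And>n. t n \<in> S" "incseq t" "\<And>y. y \<in> S \<longleftrightarrow> (\<exists>n. y \<le> t n)"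
proof (cases "bdd_above S")
  case False
  have tS: "real n \<in> S" for n
  proof -
    obtain y where "y \<in> S" "real n < y" using False unfolding bdd_above_def by (meson not_le)
    thus ?thesis using down by auto
  qed
  show thesis
  proof (rule that[of real])
    show "incseq real" by (simp add: incseq_def)
    show "y \<in> S \<longleftrightarrow> (\<exists>n. y \<le> real n)" for y
      using tS down reals_Archimedean2[of y] by (meson less_imp_le)
  qed (rule tS)
next
  case True
  define \<tau> where "\<tau> = Sup S"
  have le: "y \<le> \<tau>" if "y \<in> S" for y unfolding \<tau>_def using cSup_upper[OF that True] by simp
  show thesis
  proof (cases "\<tau> \<in> S")
    case True
    show thesis
    proof (rule that[of "\<lambda>_. \<tau>"])
      show "y \<in> S \<longleftrightarrow> (\<exists>n. y \<le> \<tau>)" for y using le down True by blast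
    qed (use True in auto)
  next
    case False
    define t where "t n = \<tau> - 1 / (real n + 1)" for n
    have tS: "t n \<in> S" for n
    proof -
      have "t n < Sup S" unfolding t_def \<tau>_def by simp
      then obtain z where "z \<in> S" "t n < z" using less_cSup_iff[OF ne True] by blast
      thus ?thesis using down by auto
    qed
    show thesis
    proof (rule that[of t])
      show "incseq t" unfolding t_def incseq_def by (auto intro!: divide_left_mono)
      show "y \<in> S \<longleftrightarrow> (\<exists>n. y \<le> t n)" for y
      proof
        assume y: "y \<in> S"
        hence "y < \<tau>" using le False by (metis order_less_le)
        hence pos: "\<tau> - y > 0" by simp
        obtain n where n0: "1 / (\<tau> - y) < real n" using reals_Archimedean2 by blast
        have n: "1 / (\<tau> - y) < real n + 1" using n0 by simp
        have "1 < (real n + 1) * (\<tau> - y)" using n pos by (simp add: divide_less_eq)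
        hence "1 / (real n + 1) < \<tau> - y" by (simp add: divide_less_eq mult.commute)
        thus "\<exists>n. y \<le> t n" unfolding t_def by (intro exI[of _ n]) linarith
      next
        assume "\<exists>n. y \<le> t n" thus "y \<in> S" using tS down by blast
      qed
    qed (rule tS)
  qed
qed

lemma swap3:
  fixes H :: "real \<Rightarrow> real \<Rightarrow> real \<Rightarrow> ennreal"
  assumes m1: "\<And>s. (\<lambda>(y,c). H s y c) \<in> borel_measurable (lborel \<Otimes>\<^sub>M lborel)"
    and m2: "(\<lambda>(s,c). \<integral>\<^sup>+y. H s y c \<partial>lborel) \<in> borel_measurable (lborel \<Otimes>\<^sub>M lborel)"
  shows "(\<integral>\<^sup>+s. \<integral>\<^sup>+y. \<integral>\<^sup>+c. H s y c \<partial>lborel \<partial>lborel \<partial>lborel) = (\<integral>\<^sup>+c. \<integral>\<^sup>+s. \<integral>\<^sup>+y. H s y c \<partial>lborel \<partial>lborel \<partial>lborel)"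
proof -
  have "(\<integral>\<^sup>+y. \<integral>\<^sup>+c. H s y c \<partial>lborel \<partial>lborel) = (\<integral>\<^sup>+c. \<integral>\<^sup>+y. H s y c \<partial>lborel \<partial>lborel)" for s
    using lborel_pair.Fubini'[OF m1[of s]] by simp
  hence "(\<integral>\<^sup>+s. \<integral>\<^sup>+y. \<integral>\<^sup>+c. H s y c \<partial>lborel \<partial>lborel \<partial>lborel) = (\<integral>\<^sup>+s. \<integral>\<^sup>+c. \<integral>\<^sup>+y. H s y c \<partial>lborel \<partial>lborel \<partial>lborel)"
    by simp
  also have "\<dots> = (\<integral>\<^sup>+c. \<integral>\<^sup>+s. \<integral>\<^sup>+y. H s y c \<partial>lborel \<partial>lborel \<partial>lborel)"
    using lborel_pair.Fubini'[OF m2] by simp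
  finally show ?thesis .
qed

lemma subst_refl:
  fixes F :: "real \<Rightarrow> ennreal"
  assumes [measurable]: "F \<in> borel_measurable borel"
  shows "(\<integral>\<^sup>+c. F (s - c) * (if 0 \<le> c \<and> c \<le> c0 then 1 else 0) \<partial>lborel) = (\<integral>\<^sup>+u. F u * indicator {s - c0..s} u \<partial>lborel)"
proof -
  have "(\<integral>\<^sup>+u. F u * indicator {s - c0..s} u \<partial>lborel) = (\<integral>\<^sup>+u. F (s + (-1) * u) * indicator {s - c0..s} (s + (-1) * u) \<partial>lborel)"
    using nn_integral_real_affine[of "\<lambda>u. F u * indicator {s - c0..s} u" "-1" s] by simp
  also have "\<dots> = (\<integral>\<^sup>+c. F (s - c) * (if 0 \<le> c \<and> c \<le> c0 then 1 else 0) \<partial>lborel)"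
    by (auto intro!: nn_integral_cong split: split_indicator)
  finally show ?thesis ..
qed

lemma core:
  fixes g :: "real \<times> real \<Rightarrow> real" and W V \<psi> :: "real \<Rightarrow> real" and \<eta> :: real
  assumes g_nonneg: "\<And>z. 0 \<le> g z" and g_meas: "g \<in> borel_measurable (borel \<Otimes>\<^sub>M borel)"
    and W_nonneg: "\<And>t. 0 \<le> W t" and W_meas: "W \<in> borel_measurable borel"
    and V_mono: "mono V" and psi_anti: "antimono \<psi>" and psi_nonneg: "\<And>t. 0 \<le> \<psi> t" and eta: "0 \<le> \<eta>"
    and FTC: "\<And>x y. x \<le> y \<Longrightarrow> ennreal (W x) + (\<integral>\<^sup>+u. ennreal (V u) * indicator {x..y} u \<partial>lborel)
         = ennreal (W y) + (\<integral>\<^sup>+u. ennreal (- V u) * indicator {x..y} u \<partial>lborel)"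
    and bnd: "\<And>x y. x \<le> y \<Longrightarrow> (\<integral>\<^sup>+u. ennreal (V u) * indicator {x..y} u \<partial>lborel) \<le> ennreal (W y)"
    and cond: "\<And>t. (\<integral>\<^sup>+s. ennreal (- V (s - \<psi> t)) * (\<integral>\<^sup>+y. ennreal (g (s, y)) * indicator {..t} y \<partial>lborel) \<partial>lborel)
         \<le> (\<integral>\<^sup>+s. ennreal (V (s - \<psi> t)) * (\<integral>\<^sup>+y. ennreal (g (s, y)) * indicator {..t} y \<partial>lborel) \<partial>lborel)"
  shows "(\<integral>\<^sup>+s. \<integral>\<^sup>+y. ennreal (W (s - \<psi> (\<eta> + y))) * ennreal (g (s, y)) \<partial>lborel \<partial>lborel)
       \<le> (\<integral>\<^sup>+s. \<integral>\<^sup>+y. ennreal (W s) * ennreal (g (s, y)) \<partial>lborel \<partial>lborel)"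
proof -
  note [measurable] = g_meas W_meas
  have V_meas[measurable]: "V \<in> borel_measurable borel" using borel_measurable_mono[OF V_mono] .
  have psi_meas[measurable]: "\<psi> \<in> borel_measurable borel"
  proof -
    have "(\<lambda>t. - \<psi> t) \<in> borel_measurable borel"
      by (rule borel_measurable_mono) (use psi_anti in \<open>auto simp: mono_def antimono_def\<close>)
    hence "(\<lambda>t. - (- \<psi> t)) \<in> borel_measurable borel" by measurable
    thus ?thesis by simp
  qed
  define In where "In s y = (\<integral>\<^sup>+c. ennreal (- V (s - c)) * (if 0 \<le> c \<and> c \<le> \<psi> (\<eta> + y) then 1 else 0) \<partial>lborel)" for s y
  define Ip where "Ip s y = (\<integral>\<^sup>+c. ennreal (V (s - c)) * (if 0 \<le> c \<and> c \<le> \<psi> (\<eta> + y) then 1 else 0) \<partial>lborel)" for s y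
  have In_m[measurable]: "(\<lambda>(s,y). In s y) \<in> borel_measurable (borel \<Otimes>\<^sub>M borel)" unfolding In_def by measurable
  have Ip_m[measurable]: "(\<lambda>(s,y). Ip s y) \<in> borel_measurable (borel \<Otimes>\<^sub>M borel)" unfolding Ip_def by measurable
  have ptw: "ennreal (W s) + In s y = ennreal (W (s - \<psi> (\<eta> + y))) + Ip s y" for s y
  proof -
    have "In s y = (\<integral>\<^sup>+u. ennreal (- V u) * indicator {s - \<psi> (\<eta> + y)..s} u \<partial>lborel)"
      unfolding In_def by (rule subst_refl[of "\<lambda>u. ennreal (- V u)"]) measurable
    moreover have "Ip s y = (\<integral>\<^sup>+u. ennreal (V u) * indicator {s - \<psi> (\<eta> + y)..s} u \<partial>lborel)"
      unfolding Ip_def by (rule subst_refl[of "\<lambda>u. ennreal (V u)"]) measurable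
    ultimately show ?thesis using FTC[of "s - \<psi> (\<eta> + y)" s] psi_nonneg[of "\<eta> + y"] by (simp add: add.commute)
  qed
  have bptw: "Ip s y \<le> ennreal (W s)" for s y
  proof -
    have "Ip s y = (\<integral>\<^sup>+u. ennreal (V u) * indicator {s - \<psi> (\<eta> + y)..s} u \<partial>lborel)"
      unfolding Ip_def by (rule subst_refl[of "\<lambda>u. ennreal (V u)"]) measurable
    thus ?thesis using bnd[of "s - \<psi> (\<eta> + y)" s] psi_nonneg[of "\<eta> + y"] by simp
  qed
  define A where "A = (\<integral>\<^sup>+s. \<integral>\<^sup>+y. ennreal (W s) * ennreal (g (s, y)) \<partial>lborel \<partial>lborel)"
  define A' where "A' = (\<integral>\<^sup>+s. \<integral>\<^sup>+y. ennreal (W (s - \<psi> (\<eta> + y))) * ennreal (g (s, y)) \<partial>lborel \<partial>lborel)"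
  define Tn where "Tn = (\<integral>\<^sup>+s. \<integral>\<^sup>+y. In s y * ennreal (g (s, y)) \<partial>lborel \<partial>lborel)"
  define Tp where "Tp = (\<integral>\<^sup>+s. \<integral>\<^sup>+y. Ip s y * ennreal (g (s, y)) \<partial>lborel \<partial>lborel)"
  have eq: "A + Tn = A' + Tp"
  proof -
    have "A + Tn = (\<integral>\<^sup>+s. (\<integral>\<^sup>+y. ennreal (W s) * ennreal (g (s, y)) \<partial>lborel) + (\<integral>\<^sup>+y. In s y * ennreal (g (s, y)) \<partial>lborel) \<partial>lborel)"
      unfolding A_def Tn_def by (rule nn_integral_add[symmetric]) measurable
    also have "\<dots> = (\<integral>\<^sup>+s. \<integral>\<^sup>+y. (ennreal (W s) + In s y) * ennreal (g (s, y)) \<partial>lborel \<partial>lborel)"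
      by (intro nn_integral_cong, subst nn_integral_add[symmetric]) (auto simp: distrib_right)
    also have "\<dots> = (\<integral>\<^sup>+s. \<integral>\<^sup>+y. (ennreal (W (s - \<psi> (\<eta> + y))) + Ip s y) * ennreal (g (s, y)) \<partial>lborel \<partial>lborel)"
      by (simp add: ptw)
    also have "\<dots> = (\<integral>\<^sup>+s. (\<integral>\<^sup>+y. ennreal (W (s - \<psi> (\<eta> + y))) * ennreal (g (s, y)) \<partial>lborel) + (\<integral>\<^sup>+y. Ip s y * ennreal (g (s, y)) \<partial>lborel) \<partial>lborel)"
      by (intro nn_integral_cong, subst nn_integral_add[symmetric]) (auto simp: distrib_right)
    also have "\<dots> = A' + Tp"
      unfolding A'_def Tp_def by (rule nn_integral_add) measurable
    finally show ?thesis .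
  qed
  have Tp_le: "Tp \<le> A"
    unfolding Tp_def A_def by (intro nn_integral_mono mult_right_mono bptw) auto
  have Tn_le: "Tn \<le> Tp"
  proof -
    have Tn_eq: "Tn = (\<integral>\<^sup>+c. \<integral>\<^sup>+s. \<integral>\<^sup>+y. ennreal (- V (s - c)) * (if 0 \<le> c \<and> c \<le> \<psi> (\<eta> + y) then 1 else 0) * ennreal (g (s, y)) \<partial>lborel \<partial>lborel \<partial>lborel)"
    proof -
      have "Tn = (\<integral>\<^sup>+s. \<integral>\<^sup>+y. \<integral>\<^sup>+c. ennreal (- V (s - c)) * (if 0 \<le> c \<and> c \<le> \<psi> (\<eta> + y) then 1 else 0) * ennreal (g (s, y)) \<partial>lborel \<partial>lborel \<partial>lborel)"
        unfolding Tn_def In_def by (intro nn_integral_cong nn_integral_multc[symmetric]) measurable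
      also have "\<dots> = (\<integral>\<^sup>+c. \<integral>\<^sup>+s. \<integral>\<^sup>+y. ennreal (- V (s - c)) * (if 0 \<le> c \<and> c \<le> \<psi> (\<eta> + y) then 1 else 0) * ennreal (g (s, y)) \<partial>lborel \<partial>lborel \<partial>lborel)"
        by (rule swap3) measurable
      finally show ?thesis .
    qed
    have Tp_eq: "Tp = (\<integral>\<^sup>+c. \<integral>\<^sup>+s. \<integral>\<^sup>+y. ennreal (V (s - c)) * (if 0 \<le> c \<and> c \<le> \<psi> (\<eta> + y) then 1 else 0) * ennreal (g (s, y)) \<partial>lborel \<partial>lborel \<partial>lborel)"
    proof -
      have "Tp = (\<integral>\<^sup>+s. \<integral>\<^sup>+y. \<integral>\<^sup>+c. ennreal (V (s - c)) * (if 0 \<le> c \<and> c \<le> \<psi> (\<eta> + y) then 1 else 0) * ennreal (g (s, y)) \<partial>lborel \<partial>lborel \<partial>lborel)"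
        unfolding Tp_def Ip_def by (intro nn_integral_cong nn_integral_multc[symmetric]) measurable
      also have "\<dots> = (\<integral>\<^sup>+c. \<integral>\<^sup>+s. \<integral>\<^sup>+y. ennreal (V (s - c)) * (if 0 \<le> c \<and> c \<le> \<psi> (\<eta> + y) then 1 else 0) * ennreal (g (s, y)) \<partial>lborel \<partial>lborel \<partial>lborel)"
        by (rule swap3) measurable
      finally show ?thesis .
    qed
    have key: "(\<integral>\<^sup>+s. \<integral>\<^sup>+y. ennreal (- V (s - c)) * (if 0 \<le> c \<and> c \<le> \<psi> (\<eta> + y) then 1 else 0) * ennreal (g (s, y)) \<partial>lborel \<partial>lborel)
        \<le> (\<integral>\<^sup>+s. \<integral>\<^sup>+y. ennreal (V (s - c)) * (if 0 \<le> c \<and> c \<le> \<psi> (\<eta> + y) then 1 else 0) * ennreal (g (s, y)) \<partial>lborel \<partial>lborel)" for c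
    proof (cases "0 \<le> c")
      case False thus ?thesis by simp
    next
      case c0: True
      define S where "S = {y. c \<le> \<psi> (\<eta> + y)}"
      have IndS: "(if 0 \<le> c \<and> c \<le> \<psi> (\<eta> + y) then 1 else 0 :: ennreal) = indicator S y" for y
        using c0 by (simp add: S_def indicator_def)
      have Sm[measurable]: "S \<in> sets borel" unfolding S_def by measurable
      define Rhs where "Rhs = (\<integral>\<^sup>+s. \<integral>\<^sup>+y. ennreal (V (s - c)) * indicator S y * ennreal (g (s, y)) \<partial>lborel \<partial>lborel)"
      have "(\<integral>\<^sup>+s. \<integral>\<^sup>+y. ennreal (- V (s - c)) * indicator S y * ennreal (g (s, y)) \<partial>lborel \<partial>lborel) \<le> Rhs"
      proof (cases "S = {}")
        case True thus ?thesis by simp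
      next
        case False
        have down: "y' \<in> S" if "y \<in> S" "y' \<le> y" for y y'
          using that antimonoD[OF psi_anti, of "\<eta> + y'" "\<eta> + y"] unfolding S_def by auto
        obtain t where tS: "\<And>n. t n \<in> S" and tinc: "incseq t" and tch: "\<And>y. y \<in> S \<longleftrightarrow> (\<exists>n. y \<le> t n)"
          using downset_seq[of S thesis] down False by blast
        define G where "G n s = (\<integral>\<^sup>+y. ennreal (- V (s - c)) * indicator {..t n} y * ennreal (g (s, y)) \<partial>lborel)" for n s
        have Gm[measurable]: "G n \<in> borel_measurable borel" for n unfolding G_def by measurable
        have ptS: "ennreal (- V (s - c)) * indicator S y * ennreal (g (s, y)) = (SUP n. ennreal (- V (s - c)) * indicator {..t n} y * ennreal (g (s, y)))" for s y
        proof (cases "y \<in> S")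
          case True
          then obtain n0 where n0: "y \<le> t n0" using tch by blast
          show ?thesis
          proof (rule antisym)
            show "ennreal (- V (s - c)) * indicator S y * ennreal (g (s, y)) \<le> (SUP n. ennreal (- V (s - c)) * indicator {..t n} y * ennreal (g (s, y)))"
              by (rule SUP_upper2[of n0]) (use n0 True in auto)
            show "(SUP n. ennreal (- V (s - c)) * indicator {..t n} y * ennreal (g (s, y))) \<le> ennreal (- V (s - c)) * indicator S y * ennreal (g (s, y))"
              by (rule SUP_least) (use True in \<open>auto split: split_indicator\<close>)
          qed
        next
          case False
          hence "\<And>n. \<not> y \<le> t n" using tch by blast
          thus ?thesis using False by simp
        qed
        have inner: "(\<integral>\<^sup>+y. ennreal (- V (s - c)) * indicator S y * ennreal (g (s, y)) \<partial>lborel) = (SUP n. G n s)" for s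
        proof -
          have "(\<integral>\<^sup>+y. ennreal (- V (s - c)) * indicator S y * ennreal (g (s, y)) \<partial>lborel)
              = (\<integral>\<^sup>+y. (SUP n. ennreal (- V (s - c)) * indicator {..t n} y * ennreal (g (s, y))) \<partial>lborel)"
            by (simp add: ptS)
          also have "\<dots> = (SUP n. G n s)" unfolding G_def
          proof (rule nn_integral_monotone_convergence_SUP)
            show "incseq (\<lambda>n y. ennreal (- V (s - c)) * indicator {..t n} y * ennreal (g (s, y)))"
            proof (rule incseq_SucI, rule le_funI)
              fix n y
              have "t n \<le> t (Suc n)" using tinc by (simp add: incseq_SucD)
              thus "ennreal (- V (s - c)) * indicator {..t n} y * ennreal (g (s, y)) \<le> ennreal (- V (s - c)) * indicator {..t (Suc n)} y * ennreal (g (s, y))"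
                by (auto split: split_indicator)
            qed
          qed measurable
          finally show ?thesis .
        qed
        have "(\<integral>\<^sup>+s. \<integral>\<^sup>+y. ennreal (- V (s - c)) * indicator S y * ennreal (g (s, y)) \<partial>lborel \<partial>lborel)
            = (\<integral>\<^sup>+s. (SUP n. G n s) \<partial>lborel)" by (simp add: inner)
        also have "\<dots> = (SUP n. \<integral>\<^sup>+s. G n s \<partial>lborel)"
        proof (rule nn_integral_monotone_convergence_SUP)
          show "incseq G"
          proof (rule incseq_SucI, rule le_funI)
            fix n s
            have "t n \<le> t (Suc n)" using tinc by (simp add: incseq_SucD)
            thus "G n s \<le> G (Suc n) s" unfolding G_def
              by (intro nn_integral_mono) (auto split: split_indicator)
          qed
        qed measurable
        also have "\<dots> \<le> Rhs"
        proof (rule SUP_least)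
          fix n
          define \<tau> where "\<tau> = t n"
          have c\<tau>: "c \<le> \<psi> \<tau>" using tS[of n] antimonoD[OF psi_anti, of \<tau> "\<eta> + \<tau>"] eta unfolding S_def \<tau>_def by auto
          have Vle: "V (s - \<psi> \<tau>) \<le> V (s - c)" for s using monoD[OF V_mono] c\<tau> by simp
          define inn where "inn s = (\<integral>\<^sup>+y. ennreal (g (s, y)) * indicator {..\<tau>} y \<partial>lborel)" for s
          have "(\<integral>\<^sup>+s. G n s \<partial>lborel) = (\<integral>\<^sup>+s. ennreal (- V (s - c)) * inn s \<partial>lborel)"
            unfolding G_def inn_def \<tau>_def
            by (intro nn_integral_cong) (simp add: nn_integral_cmult[symmetric] mult.assoc mult.commute mult.left_commute)
          also have "\<dots> \<le> (\<integral>\<^sup>+s. ennreal (- V (s - \<psi> \<tau>)) * inn s \<partial>lborel)"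
            by (intro nn_integral_mono mult_right_mono ennreal_leI) (use Vle in auto)
          also have "\<dots> \<le> (\<integral>\<^sup>+s. ennreal (V (s - \<psi> \<tau>)) * inn s \<partial>lborel)"
            unfolding inn_def by (rule cond)
          also have "\<dots> \<le> (\<integral>\<^sup>+s. ennreal (V (s - c)) * inn s \<partial>lborel)"
            by (intro nn_integral_mono mult_right_mono ennreal_leI) (use Vle in auto)
          also have "\<dots> \<le> (\<integral>\<^sup>+s. ennreal (V (s - c)) * (\<integral>\<^sup>+y. ennreal (g (s, y)) * indicator S y \<partial>lborel) \<partial>lborel)"
            unfolding inn_def
            by (intro nn_integral_mono mult_left_mono) (use down tS[of n] in \<open>auto simp: \<tau>_def split: split_indicator\<close>)
          also have "\<dots> = Rhs" unfolding Rhs_def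
            by (intro nn_integral_cong) (simp add: nn_integral_cmult[symmetric] mult.assoc mult.commute mult.left_commute)
          finally show "(\<integral>\<^sup>+s. G n s \<partial>lborel) \<le> Rhs" .
        qed
        finally show ?thesis .
      qed
      thus ?thesis unfolding Rhs_def by (simp only: IndS)
    qed
    show ?thesis unfolding Tn_eq Tp_eq by (rule nn_integral_mono) (rule key)
  qed
  show ?thesis
  proof (cases "A = \<infinity>")
    case True thus ?thesis unfolding A_def by simp
  next
    case False
    hence Tpf: "Tp \<noteq> \<infinity>" using Tp_le by (metis infinity_ennreal_def neq_top_trans)
    have "A' + Tp \<le> A + Tp" using eq Tn_le by (metis add_left_mono)
    hence "A' \<le> A" using Tpf by (simp add: add.commute ennreal_add_left_cancel_le)
    thus ?thesis unfolding A_def A'_def .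
  qed
qed

lemma nn_pair_iter:
  fixes h :: "real \<times> real \<Rightarrow> ennreal"
  assumes hm: "h \<in> borel_measurable (borel \<Otimes>\<^sub>M borel)"
  shows "(\<integral>\<^sup>+z. h z \<partial>lborel) = (\<integral>\<^sup>+x. \<integral>\<^sup>+y. h (x, y) \<partial>lborel \<partial>lborel)"
proof -
  have "(\<integral>\<^sup>+x. \<integral>\<^sup>+y. h (x, y) \<partial>lborel \<partial>lborel) = integral\<^sup>N (lborel \<Otimes>\<^sub>M lborel) h"
    by (rule lborel.nn_integral_fst)
       (use hm measurable_cong_sets[OF sets_pair_measure_cong[OF sets_lborel sets_lborel] refl] in simp)
  thus ?thesis by (simp add: lborel_prod)
qed

lemma nn_shift:
  fixes F :: "real \<Rightarrow> ennreal"
  assumes "F \<in> borel_measurable borel"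
  shows "(\<integral>\<^sup>+x. F x \<partial>lborel) = (\<integral>\<^sup>+x. F (x + c) \<partial>lborel)"
  using nn_integral_real_affine[OF assms, of 1 c] by (simp add: add.commute)

lemma nn_refl:
  fixes F :: "real \<Rightarrow> ennreal"
  assumes "F \<in> borel_measurable borel"
  shows "(\<integral>\<^sup>+x. F x \<partial>lborel) = (\<integral>\<^sup>+x. F (c - x) \<partial>lborel)"
  using nn_integral_real_affine[OF assms, of "-1" c] by simp

lemma risk_form:
  fixes f :: "real \<times> real \<Rightarrow> real" and W \<phi>0 :: "real \<Rightarrow> real" and \<theta> :: "real \<times> real"
  assumes f_nonneg: "\<And>z. f z \<ge> 0" and f_meas: "f \<in> borel_measurable borel"
    and f_swap: "\<And>z1 z2. f (z1, z2) = f (z2, z1)"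
    and f_neg: "\<And>z1 z2. f (z1, z2) = f (- z1, - z2)"
    and W_nonneg: "\<And>t. W t \<ge> 0" and W_even: "\<And>t. W t = W (- t)"
    and W_meas: "W \<in> borel_measurable borel" and phi_meas: "\<phi>0 \<in> borel_measurable borel"
  shows "(\<integral>\<^sup>+x. ennreal (W (fst x - \<phi>0 (snd x - fst x) - fst \<theta>) + W (snd x + \<phi>0 (snd x - fst x) - snd \<theta>))
            * ennreal (f (fst x - fst \<theta>, snd x - snd \<theta>)) \<partial>lborel)
       = (\<integral>\<^sup>+s. \<integral>\<^sup>+y. ennreal (W (s - \<phi>0 (snd \<theta> - fst \<theta> + y))) * ennreal (f (s, s + y)) \<partial>lborel \<partial>lborel)
       + (\<integral>\<^sup>+s. \<integral>\<^sup>+y. ennreal (W (s - \<phi>0 (snd \<theta> - fst \<theta> + y))) * ennreal (f (s, s + y)) \<partial>lborel \<partial>lborel)"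
proof -
  note [measurable] = W_meas phi_meas
  have [measurable]: "f \<in> borel_measurable (borel \<Otimes>\<^sub>M borel)" using f_meas by (simp add: borel_prod)
  define \<eta> where "\<eta> = snd \<theta> - fst \<theta>"
  define t1 where "t1 = fst \<theta>"
  define t2 where "t2 = snd \<theta>"
  define \<phi> where "\<phi> y = \<phi>0 (\<eta> + y)" for y
  have phim[measurable]: "\<phi> \<in> borel_measurable borel" unfolding \<phi>_def by measurable
  have "(\<integral>\<^sup>+x. ennreal (W (fst x - \<phi>0 (snd x - fst x) - fst \<theta>) + W (snd x + \<phi>0 (snd x - fst x) - snd \<theta>))
            * ennreal (f (fst x - fst \<theta>, snd x - snd \<theta>)) \<partial>lborel)
     = (\<integral>\<^sup>+x1. \<integral>\<^sup>+x2. ennreal (W (x1 - \<phi>0 (x2 - x1) - t1) + W (x2 + \<phi>0 (x2 - x1) - t2))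
            * ennreal (f (x1 - t1, x2 - t2)) \<partial>lborel \<partial>lborel)"
    unfolding t1_def t2_def by (subst nn_pair_iter; (measurable | simp))
  also have "\<dots> = (\<integral>\<^sup>+z1. \<integral>\<^sup>+x2. ennreal (W ((z1 + t1) - \<phi>0 (x2 - (z1 + t1)) - t1) + W (x2 + \<phi>0 (x2 - (z1 + t1)) - t2))
            * ennreal (f ((z1 + t1) - t1, x2 - t2)) \<partial>lborel \<partial>lborel)"
    by (rule nn_shift) measurable
  also have "\<dots> = (\<integral>\<^sup>+z1. \<integral>\<^sup>+y. ennreal (W ((z1 + t1) - \<phi>0 ((y + (z1 + t2)) - (z1 + t1)) - t1) + W ((y + (z1 + t2)) + \<phi>0 ((y + (z1 + t2)) - (z1 + t1)) - t2))
            * ennreal (f ((z1 + t1) - t1, (y + (z1 + t2)) - t2)) \<partial>lborel \<partial>lborel)"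
    by (intro nn_integral_cong nn_shift) measurable
  also have "\<dots> = (\<integral>\<^sup>+s. \<integral>\<^sup>+y. (ennreal (W (s - \<phi> y)) + ennreal (W (s + y + \<phi> y))) * ennreal (f (s, s + y)) \<partial>lborel \<partial>lborel)"
  proof (intro nn_integral_cong)
    fix s y
    have e1: "(y + (s + t2)) - (s + t1) = \<eta> + y" unfolding \<eta>_def t1_def t2_def by simp
    have e2: "(s + t1) - \<phi>0 (\<eta> + y) - t1 = s - \<phi> y" unfolding \<phi>_def by simp
    have e3: "(y + (s + t2)) + \<phi>0 (\<eta> + y) - t2 = s + y + \<phi> y" unfolding \<phi>_def by simp
    have e4: "((s + t1) - t1, (y + (s + t2)) - t2) = (s, s + y)" by simp
    show "ennreal (W ((s + t1) - \<phi>0 ((y + (s + t2)) - (s + t1)) - t1) + W ((y + (s + t2)) + \<phi>0 ((y + (s + t2)) - (s + t1)) - t2))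
            * ennreal (f ((s + t1) - t1, (y + (s + t2)) - t2)) = (ennreal (W (s - \<phi> y)) + ennreal (W (s + y + \<phi> y))) * ennreal (f (s, s + y))"
      unfolding e1 e2 e3 e4 using W_nonneg by (simp add: ennreal_plus)
  qed
  also have "\<dots> = (\<integral>\<^sup>+s. \<integral>\<^sup>+y. ennreal (W (s - \<phi> y)) * ennreal (f (s, s + y)) \<partial>lborel \<partial>lborel)
       + (\<integral>\<^sup>+s. \<integral>\<^sup>+y. ennreal (W (s + y + \<phi> y)) * ennreal (f (s, s + y)) \<partial>lborel \<partial>lborel)"
  proof -
    have "(\<integral>\<^sup>+s. \<integral>\<^sup>+y. (ennreal (W (s - \<phi> y)) + ennreal (W (s + y + \<phi> y))) * ennreal (f (s, s + y)) \<partial>lborel \<partial>lborel)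
      = (\<integral>\<^sup>+s. (\<integral>\<^sup>+y. ennreal (W (s - \<phi> y)) * ennreal (f (s, s + y)) \<partial>lborel) + (\<integral>\<^sup>+y. ennreal (W (s + y + \<phi> y)) * ennreal (f (s, s + y)) \<partial>lborel) \<partial>lborel)"
      by (intro nn_integral_cong, subst nn_integral_add[symmetric]) (auto simp: distrib_right)
    also have "\<dots> = (\<integral>\<^sup>+s. \<integral>\<^sup>+y. ennreal (W (s - \<phi> y)) * ennreal (f (s, s + y)) \<partial>lborel \<partial>lborel)
       + (\<integral>\<^sup>+s. \<integral>\<^sup>+y. ennreal (W (s + y + \<phi> y)) * ennreal (f (s, s + y)) \<partial>lborel \<partial>lborel)"
      by (rule nn_integral_add) measurable
    finally show ?thesis .
  qed
  also have "(\<integral>\<^sup>+s. \<integral>\<^sup>+y. ennreal (W (s + y + \<phi> y)) * ennreal (f (s, s + y)) \<partial>lborel \<partial>lborel)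
      = (\<integral>\<^sup>+s. \<integral>\<^sup>+y. ennreal (W (s - \<phi> y)) * ennreal (f (s, s + y)) \<partial>lborel \<partial>lborel)"
  proof -
    have "(\<integral>\<^sup>+s. \<integral>\<^sup>+y. ennreal (W (s + y + \<phi> y)) * ennreal (f (s, s + y)) \<partial>lborel \<partial>lborel)
       = (\<integral>\<^sup>+y. \<integral>\<^sup>+s. ennreal (W (s + y + \<phi> y)) * ennreal (f (s, s + y)) \<partial>lborel \<partial>lborel)"
      by (rule lborel_pair.Fubini'[symmetric]) measurable
    also have "\<dots> = (\<integral>\<^sup>+y. \<integral>\<^sup>+s. ennreal (W ((- y - s) + y + \<phi> y)) * ennreal (f ((- y - s), (- y - s) + y)) \<partial>lborel \<partial>lborel)"
      by (intro nn_integral_cong nn_refl) measurable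
    also have "\<dots> = (\<integral>\<^sup>+y. \<integral>\<^sup>+s. ennreal (W (s - \<phi> y)) * ennreal (f (s, s + y)) \<partial>lborel \<partial>lborel)"
    proof (intro nn_integral_cong)
      fix y s
      have "W ((- y - s) + y + \<phi> y) = W (s - \<phi> y)" using W_even[of "s - \<phi> y"] by simp
      moreover have "f ((- y - s), (- y - s) + y) = f (s, s + y)"
        using f_neg[of "- y - s" "- s"] f_swap[of "y + s" s] by (simp add: add.commute)
      ultimately show "ennreal (W ((- y - s) + y + \<phi> y)) * ennreal (f ((- y - s), (- y - s) + y)) = ennreal (W (s - \<phi> y)) * ennreal (f (s, s + y))"
        by simp
    qed
    also have "\<dots> = (\<integral>\<^sup>+s. \<integral>\<^sup>+y. ennreal (W (s - \<phi> y)) * ennreal (f (s, s + y)) \<partial>lborel \<partial>lborel)"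
      by (rule lborel_pair.Fubini') measurable
    finally show ?thesis .
  qed
  finally show ?thesis unfolding \<phi>_def \<eta>_def .
qed

lemma AE_translate:
  fixes c :: real
  assumes "AE x in lborel. P x"
  shows "AE x in lborel. P (c + x)"
proof -
  have "AE x in distr lborel borel ((+) c). P x" unfolding lborel_distr_plus by (rule assms)
  thus ?thesis by (rule AE_distrD[rotated]) simp
qed

lemma nn_refl_ind:
  fixes F :: "real \<Rightarrow> ennreal"
  assumes [measurable]: "F \<in> borel_measurable borel"
  shows "(\<integral>\<^sup>+u. F (- u) * indicator {x..y} u \<partial>lborel) = (\<integral>\<^sup>+u. F u * indicator {- y..- x} u \<partial>lborel)"
proof -
  have "(\<integral>\<^sup>+u. F u * indicator {- y..- x} u \<partial>lborel) = (\<integral>\<^sup>+u. F (0 - u) * indicator {- y..- x} (0 - u) \<partial>lborel)"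
    by (rule nn_refl) measurable
  also have "\<dots> = (\<integral>\<^sup>+u. F (- u) * indicator {x..y} u \<partial>lborel)"
    by (intro nn_integral_cong) (auto split: split_indicator)
  finally show ?thesis ..
qed

theorem theorem2p2p1:
  fixes f :: "real \<times> real \<Rightarrow> real"
    and W W' :: "real \<Rightarrow> real"
    and \<psi> :: "real \<Rightarrow> real"
    and \<theta> :: "real \<times> real"
  assumes f_nonneg: "\<And>z. f z \<ge> 0"
    and f_meas: "f \<in> borel_measurable lborel"
    and f_prob: "(\<integral>\<^sup>+ z. ennreal (f z) \<partial>lborel) = 1"
    and f_swap: "\<And>z1 z2. f (z1, z2) = f (z2, z1)"
    and f_neg: "\<And>z1 z2. f (z1, z2) = f (- z1, - z2)"
    and W_nonneg: "\<And>t. W t \<ge> 0"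
    and W_ac: "abs_cont W"
    and W_0: "W 0 = 0"
    and W_even: "\<And>t. W t = W (- t)"
    and W_dec: "\<And>s t. s < t \<Longrightarrow> t < 0 \<Longrightarrow> W t < W s"
    and W_inc: "\<And>s t. 0 < s \<Longrightarrow> s < t \<Longrightarrow> W s < W t"
    and W'_deriv: "AE t in lborel. (W has_real_derivative W' t) (at t)"
    and W'_mono_ae: "\<exists>N \<in> null_sets lborel. mono_on (- N) W'"
    and psi_lim: "(\<psi> \<longlongrightarrow> 0) at_top"
    and cond: "(antimono \<psi> \<and> (\<forall>t. dint_nonneg f W' \<psi> t)) \<or>
               (mono \<psi> \<and> (\<forall>t. dint_nonpos f W' \<psi> t))"
    and theta: "fst \<theta> \<le> snd \<theta>"
  shows "risk f W \<theta> (delta_psi \<psi>) \<le> risk f W \<theta> delta0"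
proof -
  obtain N where N: "N \<in> null_sets lborel" "mono_on (- N) W'" using W'_mono_ae by blast
  obtain V where Vm: "mono V" and VW: "\<And>x. x \<notin> N \<Longrightarrow> V x = W' x"
    using V_construct[OF N] by blast
  obtain N1 where N1: "{x \<in> space lborel. \<not> (W has_real_derivative W' x) (at x)} \<subseteq> N1"
      "emeasure lborel N1 = 0" "N1 \<in> sets lborel"
    using AE_E[OF W'_deriv] by blast
  define Nd where "Nd = N \<union> N1"
  have N1n: "N1 \<in> null_sets lborel" using N1(2,3) by (simp add: null_sets_def)
  have Nd: "Nd \<in> null_sets lborel" unfolding Nd_def using N(1) N1n by (rule null_sets.Un)
  have der: "(W has_real_derivative V x) (at x)" if "x \<notin> Nd" for x
  proof -
    have "(W has_real_derivative W' x) (at x)" using N1(1) that unfolding Nd_def by auto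
    thus ?thesis using VW[of x] that unfolding Nd_def by simp
  qed
  interpret Wloc W V Nd
    by unfold_locales (use W_ac W_0 W_nonneg W_dec W_inc Vm Nd der in auto)
  have W_meas[measurable]: "W \<in> borel_measurable borel"
    by (rule borel_measurable_continuous_onI[OF W_cont])
  have f_meas1: "f \<in> borel_measurable borel" using f_meas by (simp add: measurable_lborel1)
  have f_meas2[measurable]: "f \<in> borel_measurable (borel \<Otimes>\<^sub>M borel)"
    using f_meas by (simp add: borel_prod)
  have psi_meas[measurable]: "\<psi> \<in> borel_measurable borel"
  proof (cases "mono \<psi>")
    case True thus ?thesis by (rule borel_measurable_mono)
  next
    case False
    hence am: "antimono \<psi>" using cond by blast
    have "(\<lambda>t. - \<psi> t) \<in> borel_measurable borel"
      by (rule borel_measurable_mono) (use am in \<open>auto simp: mono_def antimono_def\<close>)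
    hence "(\<lambda>t. - (- \<psi> t)) \<in> borel_measurable borel" by measurable
    thus ?thesis by simp
  qed
  define \<eta> where "\<eta> = snd \<theta> - fst \<theta>"
  have eta: "0 \<le> \<eta>" using theta unfolding \<eta>_def by simp
  define Q where "Q \<phi>0 = (\<integral>\<^sup>+s. \<integral>\<^sup>+y. ennreal (W (s - \<phi>0 (\<eta> + y))) * ennreal (f (s, s + y)) \<partial>lborel \<partial>lborel)" for \<phi>0
  have R1: "risk f W \<theta> (delta_psi \<psi>) = Q \<psi> + Q \<psi>"
    unfolding risk_def loss_def delta_psi_def Let_def Q_def \<eta>_def
    using risk_form[OF f_nonneg f_meas1 f_swap f_neg W_nonneg W_even W_meas psi_meas, of \<theta>] f_swap
    by (simp add: diff_diff_eq)
  have R0: "risk f W \<theta> delta0 = Q (\<lambda>_. 0) + Q (\<lambda>_. 0)"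
    unfolding risk_def loss_def delta0_def Q_def \<eta>_def
    using risk_form[OF f_nonneg f_meas1 f_swap f_neg W_nonneg W_even W_meas, of "\<lambda>_. 0" \<theta>] f_swap
    by simp
  define I where "I t s = (\<integral>\<^sup>+y. ennreal (f (s, s + y)) * indicator {..t} y \<partial>lborel)" for t s
  have Im[measurable]: "I t \<in> borel_measurable borel" for t unfolding I_def by measurable
  have dpos: "dint_pos f W' \<psi> t = (\<integral>\<^sup>+s. ennreal (V (s - \<psi> t)) * I t s \<partial>lborel)" for t
    unfolding dint_pos_def inner_int_def I_def
  proof (rule nn_integral_cong_AE)
    have "AE s in lborel. (- \<psi> t) + s \<notin> N" by (rule AE_translate) (rule AE_not_in[OF N(1)])
    thus "AE s in lborel. ennreal (max 0 (W' (s - \<psi> t))) * (\<integral>\<^sup>+y\<in>{..t}. ennreal (f (s, s + y))\<partial>lborel)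
        = ennreal (V (s - \<psi> t)) * (\<integral>\<^sup>+y. ennreal (f (s, s + y)) * indicator {..t} y\<partial>lborel)"
      by eventually_elim (simp add: VW ennreal_max_0)
  qed
  have dneg: "dint_neg f W' \<psi> t = (\<integral>\<^sup>+s. ennreal (- V (s - \<psi> t)) * I t s \<partial>lborel)" for t
    unfolding dint_neg_def inner_int_def I_def
  proof (rule nn_integral_cong_AE)
    have "AE s in lborel. (- \<psi> t) + s \<notin> N" by (rule AE_translate) (rule AE_not_in[OF N(1)])
    thus "AE s in lborel. ennreal (max 0 (- W' (s - \<psi> t))) * (\<integral>\<^sup>+y\<in>{..t}. ennreal (f (s, s + y))\<partial>lborel)
        = ennreal (- V (s - \<psi> t)) * (\<integral>\<^sup>+y. ennreal (f (s, s + y)) * indicator {..t} y\<partial>lborel)"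
      by eventually_elim (simp add: VW ennreal_max_0)
  qed
  have key: "Q \<psi> \<le> Q (\<lambda>_. 0)"
  proof -
    from cond consider (a) "antimono \<psi>" "\<forall>t. dint_nonneg f W' \<psi> t" | (b) "mono \<psi>" "\<forall>t. dint_nonpos f W' \<psi> t"
      by blast
    thus ?thesis
    proof cases
      case a
      have psi_nonneg: "0 \<le> \<psi> t" for t
      proof (rule tendsto_upperbound[OF psi_lim])
        show "\<forall>\<^sub>F s in at_top. \<psi> s \<le> \<psi> t"
          unfolding eventually_at_top_linorder by (intro exI[of _ t] allI impI antimonoD[OF a(1)])
      qed simp
      define gA where "gA z = f (fst z, fst z + snd z)" for z
      have gA_simp[simp]: "gA (s, y) = f (s, s + y)" for s y unfolding gA_def by simp
      have gA_m[measurable]: "gA \<in> borel_measurable (borel \<Otimes>\<^sub>M borel)" unfolding gA_def by measurable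
      have condA: "(\<integral>\<^sup>+s. ennreal (- V (s - \<psi> t)) * (\<integral>\<^sup>+y. ennreal (gA (s, y)) * indicator {..t} y \<partial>lborel) \<partial>lborel)
         \<le> (\<integral>\<^sup>+s. ennreal (V (s - \<psi> t)) * (\<integral>\<^sup>+y. ennreal (gA (s, y)) * indicator {..t} y \<partial>lborel) \<partial>lborel)" for t
      proof -
        have "dint_nonneg f W' \<psi> t" using a(2) by blast
        thus ?thesis using dpos[of t] dneg[of t] unfolding dint_nonneg_def I_def by simp
      qed
      have "(\<integral>\<^sup>+s. \<integral>\<^sup>+y. ennreal (W (s - \<psi> (\<eta> + y))) * ennreal (gA (s, y)) \<partial>lborel \<partial>lborel)
       \<le> (\<integral>\<^sup>+s. \<integral>\<^sup>+y. ennreal (W s) * ennreal (gA (s, y)) \<partial>lborel \<partial>lborel)"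
        by (rule core[OF _ gA_m W_nonneg W_meas Vm a(1) psi_nonneg eta FTC bound_p condA])
           (use f_nonneg in \<open>auto simp: gA_def\<close>)
      thus ?thesis unfolding Q_def by simp
    next
      case b
      have psi_nonpos: "\<psi> t \<le> 0" for t
      proof (rule tendsto_lowerbound[OF psi_lim])
        show "\<forall>\<^sub>F s in at_top. \<psi> t \<le> \<psi> s"
          unfolding eventually_at_top_linorder by (intro exI[of _ t] allI impI monoD[OF b(1)])
      qed simp
      define gB where "gB z = f (- fst z, - fst z + snd z)" for z
      have gB_simp[simp]: "gB (s, y) = f (- s, - s + y)" for s y unfolding gB_def by simp
      have gB_m[measurable]: "gB \<in> borel_measurable (borel \<Otimes>\<^sub>M borel)" unfolding gB_def by measurable
      define VB where "VB x = - V (- x)" for x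
      define \<psi>B where "\<psi>B t = - \<psi> t" for t
      have VBm: "mono VB" unfolding VB_def by (rule monoI) (use monoD[OF Vm] in auto)
      have psiBa: "antimono \<psi>B" unfolding \<psi>B_def by (rule antimonoI) (use monoD[OF b(1)] in auto)
      have psiBn: "0 \<le> \<psi>B t" for t unfolding \<psi>B_def using psi_nonpos[of t] by simp
      have Vmeas[measurable]: "V \<in> borel_measurable borel" by (rule V_borel)
      have reflV: "(\<integral>\<^sup>+u. ennreal (VB u) * indicator {x..y} u \<partial>lborel) = (\<integral>\<^sup>+u. ennreal (- V u) * indicator {- y..- x} u \<partial>lborel)" for x y
        unfolding VB_def using nn_refl_ind[of "\<lambda>u. ennreal (- V u)" x y] by simp
      have reflV2: "(\<integral>\<^sup>+u. ennreal (- VB u) * indicator {x..y} u \<partial>lborel) = (\<integral>\<^sup>+u. ennreal (V u) * indicator {- y..- x} u \<partial>lborel)" for x y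
        unfolding VB_def using nn_refl_ind[of "\<lambda>u. ennreal (V u)" x y] by simp
      have FTCB: "ennreal (W x) + (\<integral>\<^sup>+u. ennreal (VB u) * indicator {x..y} u \<partial>lborel)
         = ennreal (W y) + (\<integral>\<^sup>+u. ennreal (- VB u) * indicator {x..y} u \<partial>lborel)" if "x \<le> y" for x y
        unfolding reflV reflV2 using FTC[of "- y" "- x"] that W_even[of x] W_even[of y] by (simp add: add.commute)
      have bndB: "(\<integral>\<^sup>+u. ennreal (VB u) * indicator {x..y} u \<partial>lborel) \<le> ennreal (W y)" if "x \<le> y" for x y
        unfolding reflV using bound_n[of "- y" "- x"] that W_even[of y] by simp
      have condB: "(\<integral>\<^sup>+s. ennreal (- VB (s - \<psi>B t)) * (\<integral>\<^sup>+y. ennreal (gB (s, y)) * indicator {..t} y \<partial>lborel) \<partial>lborel)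
         \<le> (\<integral>\<^sup>+s. ennreal (VB (s - \<psi>B t)) * (\<integral>\<^sup>+y. ennreal (gB (s, y)) * indicator {..t} y \<partial>lborel) \<partial>lborel)" for t
      proof -
        have e1: "(\<integral>\<^sup>+s. ennreal (- VB (s - \<psi>B t)) * (\<integral>\<^sup>+y. ennreal (gB (s, y)) * indicator {..t} y \<partial>lborel) \<partial>lborel)
            = (\<integral>\<^sup>+s. ennreal (V (0 - s - \<psi> t)) * I t (0 - s) \<partial>lborel)"
          unfolding VB_def \<psi>B_def I_def by (intro nn_integral_cong) (simp add: algebra_simps)
        have e2: "(\<integral>\<^sup>+s. ennreal (VB (s - \<psi>B t)) * (\<integral>\<^sup>+y. ennreal (gB (s, y)) * indicator {..t} y \<partial>lborel) \<partial>lborel)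
            = (\<integral>\<^sup>+s. ennreal (- V (0 - s - \<psi> t)) * I t (0 - s) \<partial>lborel)"
          unfolding VB_def \<psi>B_def I_def by (intro nn_integral_cong) (simp add: algebra_simps)
        have e3: "(\<integral>\<^sup>+s. ennreal (V (0 - s - \<psi> t)) * I t (0 - s) \<partial>lborel) = dint_pos f W' \<psi> t"
          unfolding dpos by (rule nn_refl[symmetric]) measurable
        have e4: "(\<integral>\<^sup>+s. ennreal (- V (0 - s - \<psi> t)) * I t (0 - s) \<partial>lborel) = dint_neg f W' \<psi> t"
          unfolding dneg by (rule nn_refl[symmetric]) measurable
        have "dint_nonpos f W' \<psi> t" using b(2) by blast
        thus ?thesis unfolding e1 e2 e3 e4 dint_nonpos_def by simp
      qed
      have C: "(\<integral>\<^sup>+s. \<integral>\<^sup>+y. ennreal (W (s - \<psi>B (\<eta> + y))) * ennreal (gB (s, y)) \<partial>lborel \<partial>lborel)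
       \<le> (\<integral>\<^sup>+s. \<integral>\<^sup>+y. ennreal (W s) * ennreal (gB (s, y)) \<partial>lborel \<partial>lborel)"
        by (rule core[OF _ gB_m W_nonneg W_meas VBm psiBa psiBn eta FTCB bndB condB])
           (use f_nonneg in \<open>auto simp: gB_def\<close>)
      have L: "(\<integral>\<^sup>+s. \<integral>\<^sup>+y. ennreal (W (s - \<psi>B (\<eta> + y))) * ennreal (gB (s, y)) \<partial>lborel \<partial>lborel) = Q \<psi>"
      proof -
        have "(\<integral>\<^sup>+s. \<integral>\<^sup>+y. ennreal (W (s - \<psi>B (\<eta> + y))) * ennreal (gB (s, y)) \<partial>lborel \<partial>lborel)
          = (\<integral>\<^sup>+s. \<integral>\<^sup>+y. ennreal (W ((0 - s) - \<psi>B (\<eta> + y))) * ennreal (gB (0 - s, y)) \<partial>lborel \<partial>lborel)"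
          unfolding \<psi>B_def by (rule nn_refl) measurable
        also have "\<dots> = Q \<psi>" unfolding Q_def \<psi>B_def
          by (intro nn_integral_cong) (metis W_even minus_diff_eq diff_0 minus_minus diff_minus_eq_add gB_simp add.commute)
        finally show ?thesis .
      qed
      have R: "(\<integral>\<^sup>+s. \<integral>\<^sup>+y. ennreal (W s) * ennreal (gB (s, y)) \<partial>lborel \<partial>lborel) = Q (\<lambda>_. 0)"
      proof -
        have "(\<integral>\<^sup>+s. \<integral>\<^sup>+y. ennreal (W s) * ennreal (gB (s, y)) \<partial>lborel \<partial>lborel)
          = (\<integral>\<^sup>+s. \<integral>\<^sup>+y. ennreal (W (0 - s)) * ennreal (gB (0 - s, y)) \<partial>lborel \<partial>lborel)"
          by (rule nn_refl) measurable
        also have "\<dots> = Q (\<lambda>_. 0)" unfolding Q_def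
          by (intro nn_integral_cong) (metis W_even diff_0 minus_minus gB_simp diff_zero)
        finally show ?thesis .
      qed
      have "Q \<psi> = (\<integral>\<^sup>+s. \<integral>\<^sup>+y. ennreal (W (s - \<psi>B (\<eta> + y))) * ennreal (gB (s, y)) \<partial>lborel \<partial>lborel)"
        by (rule L[symmetric])
      also have "\<dots> \<le> (\<integral>\<^sup>+s. \<integral>\<^sup>+y. ennreal (W s) * ennreal (gB (s, y)) \<partial>lborel \<partial>lborel)"
        by (rule C)
      also have "\<dots> = Q (\<lambda>_. 0)" by (rule R)
      finally show ?thesis .
    qed
  qed
  show ?thesis unfolding R1 R0 by (intro add_mono key)
qed


end
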